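(* Let $\delta_k\in(0,\overline\delta)$ with $\delta_k\to0$, and let $\ddot q_{\delta_k}\in\overline{\mathbb{Q}}_{\delta_k}(f)$ satisfy $\sup_k\|\ddot q_{\delta_k}\|_{L^{1,2}(\Omega_{\delta_k}\times\Omega_{\delta_k})}<\infty$. Suppose the measures $R_{\delta_k}\ddot q_{\delta_k}\,dx$ converge weakly to $\hat q\in\mathcal{M}(\overline\Omega;\mathbb{R}^n)$. Then for every $\phi\in C^1_c(\Omega)$, $-\int_\Omega\nabla\phi(x)\cdot d\hat q(x)=\int_\Omega f\phi\,dx$.
   Context: $n\ge2$, $\Omega\subset\mathbb{R}^n$ bounded connected open with Lipschitz boundary, $f\in L^2(\Omega)$, $\overline\delta>0$. For each $\delta\in(0,\overline\delta)$: $\Omega_\delta=\bigcup_{x\in\Omega}B(x,\delta)$; $\omega_\delta:\mathbb{R}^n\to[0,\infty)$ is radial, measurable, supported in $B(0,\delta)$, with $\int|z|^2\omega_\delta^2=K_{2,n}^{-1}$, $K_{2,n}=|\mathbb{S}^{n-1}|^{-1}\int_{\mathbb{S}^{n-1}}|s\cdot e|^2ds$. Functions on $\Omega$ are extended by zero; $\mathcal{G}_\delta u(x,x')=[u(x)-u(x')]\omega_\delta(x-x')$; $\mathcal{U}_{\delta,0}=\{u\in L^2(\Omega):\mathcal{G}_\delta u\in L^2(\Omega_\delta\times\Omega_\delta)\}$. $\mathbb{Q}_\delta$ is the set of $\ddot q\in L^2(\Omega_\delta\times\Omega_\delta)$ for which some $g\in L^2(\Omega)$ satisfies $\int_\Omega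 gv=-\int\int\ddot q\,\mathcal{G}_\delta v$ for all $v\in\mathcal{U}_{\delta,0}$; $\mathcal{D}_\delta\ddot q:=g$. $L^{1,2}(\Omega_\delta\times\Omega_\delta)$ has norm $\int_{\Omega_\delta}(\int_{\Omega_\delta}|\ddot q(x,x')|^2dx')^{1/2}dx$. $\mathcal{D}_\delta$ viewed as an unbounded operator $L^{1,2}\to L^2(\Omega)$ with domain $\mathbb{Q}_\delta$ is closable; $\overline{\mathcal{D}}_\delta$ denotes its closure, $\overline{\mathbb{Q}}_\delta$ its domain, $\overline{\mathbb{Q}}_\delta(f)=\{\ddot q\in\overline{\mathbb{Q}}_\delta:\overline{\mathcal{D}}_\delta\ddot q=f\}$. $R_\delta\ddot q(x)=\int_{\Omega_\delta}(x-x')\ddot q(x,x')\omega_\delta(x-x')dx'$. $\mathcal{M}(\overline\Omega;\mathbb{R}^n)$ is the space of finite $\mathbb{R}^n$-valued Radon measures on $\overline\Omega$. *)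

theory Defs
  imports "HOL-Analysis.Analysis"
begin

definition lipschitz_boundary :: "'a::euclidean_space set \<Rightarrow> bool" where
  "lipschitz_boundary \<Omega> \<longleftrightarrow>
    (\<forall>p\<in>frontier \<Omega>. \<exists>(e::'a) r h L (g::'a \<Rightarrow> real).
       norm e = 1 \<and> r > 0 \<and> h > 0 \<and>
       L-lipschitz_on {y. y \<bullet> e = 0} g \<and> g 0 = 0 \<and>
       (\<forall>y. y \<bullet> e = 0 \<and> norm y < r \<longrightarrow> \<bar>g y\<bar> < h / 2) \<and>
       \<Omega> \<inter> {p + y + t *\<^sub>R e | y t. y \<bullet> e = 0 \<and> norm y < r \<and> \<bar>t\<bar> < h}
         = {p + y + t *\<^sub>R e | y t. y \<bullet> e = 0 \<and> norm y < r \<and> \<bar>t\<bar> < h \<and> t < g y})"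

definition Omega_d :: "'a::euclidean_space set \<Rightarrow> real \<Rightarrow> 'a set" where
  "Omega_d \<Omega> \<delta> = (\<Union>x\<in>\<Omega>. ball x \<delta>)"

text \<open>Average of |s . e|^2 over the unit sphere, computed with the cone
(normalised surface) measure: the surface measure of A on the sphere is n times
the volume of the cone {t s | 0<t<=1, s in A}; hence the sphere average of a
function G equals the ball average of G(x/|x|). e is a fixed unit basis vector.\<close>
definition K2n :: "'a::euclidean_space itself \<Rightarrow> real" where
  "K2n _ = (let e = (SOME b. b \<in> (Basis::'a set)) in
     set_lebesgue_integral lebesgue (ball (0::'a) 1) (\<lambda>x. ((x /\<^sub>R norm x) \<bullet> e)\<^sup>2)
       / measure lebesgue (ball (0::'a) 1))"

definition admissible_kernels :: "real \<Rightarrow> (real \<Rightarrow> 'a::euclidean_space \<Rightarrow> real) \<Rightarrow> bool" where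
  "admissible_kernels dbar \<omega> \<longleftrightarrow>
    (\<forall>\<delta>. 0 < \<delta> \<and> \<delta> < dbar \<longrightarrow>
       \<omega> \<delta> \<in> borel_measurable borel \<and>
       (\<forall>z. \<omega> \<delta> z \<ge> 0) \<and>
       (\<forall>z w. norm z = norm w \<longrightarrow> \<omega> \<delta> z = \<omega> \<delta> w) \<and>
       (\<forall>z. norm z \<ge> \<delta> \<longrightarrow> \<omega> \<delta> z = 0) \<and>
       integral\<^sup>L lebesgue (\<lambda>z. (norm z)\<^sup>2 * (\<omega> \<delta> z)\<^sup>2) = inverse (K2n TYPE('a)))"

definition L2on :: "'b::euclidean_space set \<Rightarrow> ('b \<Rightarrow> real) \<Rightarrow> bool" where
  "L2on A u \<longleftrightarrow> set_borel_measurable lebesgue A u \<and>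
                 set_integrable lebesgue A (\<lambda>x. (u x)\<^sup>2)"

definition ext0 :: "'a set \<Rightarrow> ('a \<Rightarrow> real) \<Rightarrow> 'a \<Rightarrow> real" where
  "ext0 \<Omega> u x = (if x \<in> \<Omega> then u x else 0)"

definition Gop :: "'a::euclidean_space set \<Rightarrow> (real \<Rightarrow> 'a \<Rightarrow> real) \<Rightarrow> real
                   \<Rightarrow> ('a \<Rightarrow> real) \<Rightarrow> 'a \<times> 'a \<Rightarrow> real" where
  "Gop \<Omega> \<omega> \<delta> u p = (ext0 \<Omega> u (fst p) - ext0 \<Omega> u (snd p)) * \<omega> \<delta> (fst p - snd p)"

definition U0 :: "'a::euclidean_space set \<Rightarrow> (real \<Rightarrow> 'a \<Rightarrow> real) \<Rightarrow> real \<Rightarrow> ('a \<Rightarrow> real) set" where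
  "U0 \<Omega> \<omega> \<delta> = {u. L2on \<Omega> u \<and>
      L2on (Omega_d \<Omega> \<delta> \<times> Omega_d \<Omega> \<delta>) (Gop \<Omega> \<omega> \<delta> u)}"

text \<open>g is (a representative of) the nonlocal divergence D_delta q.\<close>
definition Drel :: "'a::euclidean_space set \<Rightarrow> (real \<Rightarrow> 'a \<Rightarrow> real) \<Rightarrow> real
                    \<Rightarrow> ('a \<times> 'a \<Rightarrow> real) \<Rightarrow> ('a \<Rightarrow> real) \<Rightarrow> bool" where
  "Drel \<Omega> \<omega> \<delta> q g \<longleftrightarrow> L2on \<Omega> g \<and>
     (\<forall>v\<in>U0 \<Omega> \<omega> \<delta>.
        set_lebesgue_integral lebesgue \<Omega> (\<lambda>x. g x * v x)
        = - set_lebesgue_integral lebesgue (Omega_d \<Omega> \<delta> \<times> Omega_d \<Omega> \<delta>)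
              (\<lambda>p. q p * Gop \<Omega> \<omega> \<delta> v p))"

definition Qset :: "'a::euclidean_space set \<Rightarrow> (real \<Rightarrow> 'a \<Rightarrow> real) \<Rightarrow> real
                    \<Rightarrow> ('a \<times> 'a \<Rightarrow> real) set" where
  "Qset \<Omega> \<omega> \<delta> = {q. L2on (Omega_d \<Omega> \<delta> \<times> Omega_d \<Omega> \<delta>) q \<and> (\<exists>g. Drel \<Omega> \<omega> \<delta> q g)}"

definition sqrtE :: "ennreal \<Rightarrow> ennreal" where
  "sqrtE e = (if e = top then top else ennreal (sqrt (enn2real e)))"

definition L12norm :: "'a::euclidean_space set \<Rightarrow> ('a \<times> 'a \<Rightarrow> real) \<Rightarrow> ennreal" where
  "L12norm A q = (\<integral>\<^sup>+ x. indicator A x *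
       sqrtE (\<integral>\<^sup>+ x'. indicator A x' * ennreal ((q (x, x'))\<^sup>2) \<partial>lebesgue) \<partial>lebesgue)"

definition L12 :: "'a::euclidean_space set \<Rightarrow> ('a \<times> 'a \<Rightarrow> real) \<Rightarrow> bool" where
  "L12 A q \<longleftrightarrow> set_borel_measurable lebesgue (A \<times> A) q \<and> L12norm A q < top"

text \<open>Qbar_delta(f): q lies in the domain of the closure of D_delta
(as an operator L^{1,2} -> L^2(Omega) with domain Q_delta) and the closure maps
it to f, i.e. (q,f) lies in the closure of the graph of D_delta.\<close>
definition Qbar :: "'a::euclidean_space set \<Rightarrow> (real \<Rightarrow> 'a \<Rightarrow> real) \<Rightarrow> real
                    \<Rightarrow> ('a \<Rightarrow> real) \<Rightarrow> ('a \<times> 'a \<Rightarrow> real) set" where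
  "Qbar \<Omega> \<omega> \<delta> f = {q. L12 (Omega_d \<Omega> \<delta>) q \<and>
     (\<exists>qs gs. (\<forall>k. qs k \<in> Qset \<Omega> \<omega> \<delta> \<and> Drel \<Omega> \<omega> \<delta> (qs k) (gs k)) \<and>
        (\<lambda>k. L12norm (Omega_d \<Omega> \<delta>) (\<lambda>p. qs k p - q p)) \<longlonglongrightarrow> 0 \<and>
        (\<lambda>k. \<integral>\<^sup>+ x. ennreal (indicator \<Omega> x * (gs k x - f x)\<^sup>2) \<partial>lebesgue) \<longlonglongrightarrow> 0)}"

definition Rop :: "'a::euclidean_space set \<Rightarrow> (real \<Rightarrow> 'a \<Rightarrow> real) \<Rightarrow> real
                   \<Rightarrow> ('a \<times> 'a \<Rightarrow> real) \<Rightarrow> 'a \<Rightarrow> 'a" where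
  "Rop \<Omega> \<omega> \<delta> q x = set_lebesgue_integral lebesgue (Omega_d \<Omega> \<delta>)
      (\<lambda>x'. (q (x, x') * \<omega> \<delta> (x - x')) *\<^sub>R (x - x'))"

text \<open>A finite R^n-valued Radon measure on closure Omega, represented (polar
decomposition) as h mu with mu a finite Borel measure concentrated on
closure Omega and h in L^1(mu; R^n).\<close>
definition vec_measure_on :: "'a::euclidean_space set \<Rightarrow> 'a measure \<Rightarrow> ('a \<Rightarrow> 'a) \<Rightarrow> bool" where
  "vec_measure_on K \<mu> h \<longleftrightarrow> sets \<mu> = sets (borel :: 'a measure) \<and> finite_measure \<mu> \<and>
      emeasure \<mu> (- K) = 0 \<and> h \<in> borel_measurable borel \<and> integrable \<mu> h"

end

theory Submission
  imports Defs "HOL-Analysis.Analysis"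
begin

lemma sqrtE_le:
  fixes u v w :: ennreal
  assumes "u^2 \<le> v * w"
  shows "u \<le> sqrtE v * sqrtE w"
proof -
  consider "v = 0 \<or> w = 0" | "v = top" "w \<noteq> 0" | "w = top" "v \<noteq> 0" | "v \<noteq> 0" "w \<noteq> 0" "v \<noteq> top" "w \<noteq> top"
    by blast
  then show ?thesis
  proof cases
    case 1
    then have "u^2 = 0" using assms by auto
    then show ?thesis by simp
  next
    case 2
    have "sqrtE w \<noteq> 0" using 2 unfolding sqrtE_def
      by (cases w) (auto simp: ennreal_eq_0_iff)
    then have "sqrtE v * sqrtE w = top" using 2 by (simp add: sqrtE_def ennreal_mult_eq_top_iff)
    then show ?thesis by simp
  next
    case 3
    have "sqrtE v \<noteq> 0" using 3 unfolding sqrtE_def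
      by (cases v) (auto simp: ennreal_eq_0_iff)
    then have "sqrtE v * sqrtE w = top" using 3 by (simp add: sqrtE_def ennreal_mult_eq_top_iff)
    then show ?thesis by simp
  next
    case 4
    obtain a where a: "v = ennreal a" "a \<ge> 0" using 4 by (cases v) auto
    obtain b where b: "w = ennreal b" "b \<ge> 0" using 4 by (cases w) auto
    have "u^2 < top" using assms a b by (metis ennreal_mult ennreal_less_top order_le_less_trans)
    then have "u < top" by (cases "u = top") (auto simp: power2_eq_square top.not_eq_extremum)
    then obtain c where c: "u = ennreal c" "c \<ge> 0" by (cases u) auto
    have "ennreal (c^2) \<le> ennreal (a*b)" using assms a b c by (simp add: ennreal_power ennreal_mult)
    then have "c^2 \<le> a*b" using a b by (simp add: ennreal_le_iff)
    then have "c \<le> sqrt (a*b)" using c by (simp add: real_le_rsqrt)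
    then have "c \<le> sqrt a * sqrt b" by (simp add: real_sqrt_mult)
    then show ?thesis using a b c by (simp add: sqrtE_def ennreal_mult[symmetric])
  qed
qed

lemma CS_sqrtE:
  fixes f g :: "'b \<Rightarrow> real"
  assumes [measurable]: "f \<in> borel_measurable M" "g \<in> borel_measurable M"
  shows "(\<integral>\<^sup>+x. ennreal \<bar>f x * g x\<bar> \<partial>M) \<le> sqrtE (\<integral>\<^sup>+x. ennreal ((f x)\<^sup>2) \<partial>M) * sqrtE (\<integral>\<^sup>+x. ennreal ((g x)\<^sup>2) \<partial>M)"
proof -
  have "(\<integral>\<^sup>+x. ennreal \<bar>f x\<bar> * ennreal \<bar>g x\<bar> \<partial>M)\<^sup>2 \<le> (\<integral>\<^sup>+x. ennreal \<bar>f x\<bar> ^ 2 \<partial>M) * (\<integral>\<^sup>+x. ennreal \<bar>g x\<bar> ^ 2 \<partial>M)"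
    by (rule Cauchy_Schwarz_nn_integral) auto
  moreover have "\<And>x. ennreal \<bar>f x\<bar> * ennreal \<bar>g x\<bar> = ennreal \<bar>f x * g x\<bar>"
    by (simp add: ennreal_mult abs_mult)
  moreover have "\<And>x. ennreal \<bar>f x\<bar> ^ 2 = ennreal ((f x)\<^sup>2)" "\<And>x. ennreal \<bar>g x\<bar> ^ 2 = ennreal ((g x)\<^sup>2)"
    by (simp_all add: ennreal_power)
  ultimately show ?thesis by (intro sqrtE_le) simp
qed

lemma sqrtE_mono: "a \<le> b \<Longrightarrow> sqrtE a \<le> sqrtE b"
  unfolding sqrtE_def
  by (cases a; cases b) (auto simp: ennreal_le_iff top_unique)

lemma sqrtE_0[simp]: "sqrtE 0 = 0"
  by (simp add: sqrtE_def)

lemma sqrtE_sq[simp]: "B \<ge> 0 \<Longrightarrow> sqrtE (ennreal (B\<^sup>2)) = ennreal B"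
  by (simp add: sqrtE_def)

lemma borel_version:
  fixes a :: "'a::euclidean_space \<times> 'a \<Rightarrow> real" and D :: "'a set"
  assumes "set_borel_measurable lebesgue (D \<times> D) a"
  obtains A where "A \<in> borel_measurable borel"
    "AE p in (lborel::('a\<times>'a) measure). indicator (D\<times>D) p * a p = A p"
    "AE x in lborel. AE y in lborel. indicator (D\<times>D) (x,y) * a (x,y) = A (x,y)"
    "L12norm D a = (\<integral>\<^sup>+x. sqrtE (\<integral>\<^sup>+y. ennreal ((A (x,y))\<^sup>2) \<partial>lborel) \<partial>lborel)"
proof -
  have "(\<lambda>p. indicator (D\<times>D) p * a p) \<in> borel_measurable (completion lborel)"
    using assms by (simp add: set_borel_measurable_def)
  from completion_ex_borel_measurable_real[OF this]
  obtain A where A: "A \<in> borel_measurable lborel"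
     "AE p in (lborel::('a\<times>'a) measure). indicator (D\<times>D) p * a p = A p" by blast
  have Ab: "A \<in> borel_measurable borel" using A by simp
  have "AE p in (lborel \<Otimes>\<^sub>M lborel :: ('a\<times>'a) measure). indicator (D\<times>D) p * a p = A p"
    unfolding lborel_prod by (rule A(2))
  from lborel_pair.AE_pair[OF this]
  have AE2: "AE x in lborel. AE y in lborel. indicator (D\<times>D) (x,y) * a (x,y) = A (x,y)" by simp
  have "L12norm D a = (\<integral>\<^sup>+x. sqrtE (\<integral>\<^sup>+y. ennreal ((A (x,y))\<^sup>2) \<partial>lborel) \<partial>lebesgue)"
    unfolding L12norm_def
  proof (rule nn_integral_cong_AE)
    show "AE x in lebesgue. indicator D x * sqrtE (\<integral>\<^sup>+ x'. indicator D x' * ennreal ((a (x, x'))\<^sup>2) \<partial>lebesgue) =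
         sqrtE (\<integral>\<^sup>+y. ennreal ((A (x,y))\<^sup>2) \<partial>lborel)"
    proof (rule AE_completion, use AE2 in eventually_elim)
      case (elim x)
      have "(\<integral>\<^sup>+y. ennreal ((A (x,y))\<^sup>2) \<partial>lborel) = (\<integral>\<^sup>+y. ennreal ((A (x,y))\<^sup>2) \<partial>lebesgue)"
        by (simp add: nn_integral_completion)
      also have "\<dots> = (\<integral>\<^sup>+y. ennreal ((indicator (D\<times>D) (x,y) * a (x,y))\<^sup>2) \<partial>lebesgue)"
        by (rule nn_integral_cong_AE, rule AE_completion, use elim in eventually_elim) simp
      also have "\<dots> = indicator D x * (\<integral>\<^sup>+ x'. indicator D x' * ennreal ((a (x, x'))\<^sup>2) \<partial>lebesgue)"
        by (cases "x \<in> D") (auto simp: indicator_def intro!: nn_integral_cong)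
      finally show ?case by (cases "x \<in> D") auto
    qed
  qed
  also have "\<dots> = (\<integral>\<^sup>+x. sqrtE (\<integral>\<^sup>+y. ennreal ((A (x,y))\<^sup>2) \<partial>lborel) \<partial>lborel)"
    by (simp add: nn_integral_completion)
  finally show ?thesis using that Ab A(2) AE2 by blast
qed

lemma key1b:
  fixes A W :: "'a::euclidean_space \<times> 'a \<Rightarrow> real"
  assumes [measurable]: "A \<in> borel_measurable borel" "W \<in> borel_measurable borel"
    and B: "B \<ge> 0" "\<And>x. (\<integral>\<^sup>+y. ennreal ((W (x,y))\<^sup>2) \<partial>lborel) \<le> ennreal (B\<^sup>2)"
  shows "(\<integral>\<^sup>+p. ennreal \<bar>A p * W p\<bar> \<partial>lborel) \<le> ennreal B * (\<integral>\<^sup>+x. sqrtE (\<integral>\<^sup>+y. ennreal ((A (x,y))\<^sup>2) \<partial>lborel) \<partial>lborel)"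
proof -
  have "(\<integral>\<^sup>+p. ennreal \<bar>A p * W p\<bar> \<partial>lborel) = (\<integral>\<^sup>+p. ennreal \<bar>A p * W p\<bar> \<partial>(lborel \<Otimes>\<^sub>M lborel))"
    by (simp add: lborel_prod)
  also have "\<dots> = (\<integral>\<^sup>+x. \<integral>\<^sup>+y. ennreal \<bar>A (x,y) * W (x,y)\<bar> \<partial>lborel \<partial>lborel)"
    by (rule lborel.nn_integral_fst[symmetric]) (unfold lborel_prod, simp)
  also have "\<dots> \<le> (\<integral>\<^sup>+x. sqrtE (\<integral>\<^sup>+y. ennreal ((A (x,y))\<^sup>2) \<partial>lborel) * ennreal B \<partial>lborel)"
  proof (rule nn_integral_mono)
    fix x
    have "(\<integral>\<^sup>+y. ennreal \<bar>A (x,y) * W (x,y)\<bar> \<partial>lborel) \<le> sqrtE (\<integral>\<^sup>+y. ennreal ((A (x,y))\<^sup>2) \<partial>lborel) * sqrtE (\<integral>\<^sup>+y. ennreal ((W (x,y))\<^sup>2) \<partial>lborel)"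
      by (rule CS_sqrtE) auto
    also have "\<dots> \<le> sqrtE (\<integral>\<^sup>+y. ennreal ((A (x,y))\<^sup>2) \<partial>lborel) * ennreal B"
      by (intro mult_left_mono) (use sqrtE_mono[OF B(2)[of x]] B(1) in auto)
    finally show "(\<integral>\<^sup>+y. ennreal \<bar>A (x,y) * W (x,y)\<bar> \<partial>lborel) \<le> sqrtE (\<integral>\<^sup>+y. ennreal ((A (x,y))\<^sup>2) \<partial>lborel) * ennreal B" .
  qed
  also have "\<dots> = ennreal B * (\<integral>\<^sup>+x. sqrtE (\<integral>\<^sup>+y. ennreal ((A (x,y))\<^sup>2) \<partial>lborel) \<partial>lborel)"
    by (subst nn_integral_multc) (auto simp: mult.commute sqrtE_def)
  finally show ?thesis .
qed

lemma borel_to_lebesgue: "W \<in> borel_measurable borel \<Longrightarrow> W \<in> borel_measurable (lebesgue :: 'a::euclidean_space measure)"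
  by (rule measurable_completion) simp

lemma L12_bound:
  fixes a W :: "'a::euclidean_space \<times> 'a \<Rightarrow> real" and D :: "'a set"
  assumes a: "set_borel_measurable lebesgue (D\<times>D) a" and Wm[measurable]: "W \<in> borel_measurable borel"
    and B: "B \<ge> 0" "\<And>x. (\<integral>\<^sup>+y. ennreal ((W (x,y))\<^sup>2) \<partial>lborel) \<le> ennreal (B\<^sup>2)"
  shows "(\<integral>\<^sup>+p. ennreal \<bar>indicator (D\<times>D) p * a p * W p\<bar> \<partial>lebesgue) \<le> ennreal B * L12norm D a"
proof -
  obtain A where A[measurable]: "A \<in> borel_measurable borel"
    and AE1: "AE p in (lborel::('a\<times>'a) measure). indicator (D\<times>D) p * a p = A p"
    and L: "L12norm D a = (\<integral>\<^sup>+x. sqrtE (\<integral>\<^sup>+y. ennreal ((A (x,y))\<^sup>2) \<partial>lborel) \<partial>lborel)"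
    using borel_version[OF a] by blast
  have "(\<integral>\<^sup>+p. ennreal \<bar>indicator (D\<times>D) p * a p * W p\<bar> \<partial>lebesgue) = (\<integral>\<^sup>+p. ennreal \<bar>A p * W p\<bar> \<partial>lebesgue)"
    by (rule nn_integral_cong_AE, rule AE_completion, use AE1 in eventually_elim) simp
  also have "\<dots> = (\<integral>\<^sup>+p. ennreal \<bar>A p * W p\<bar> \<partial>lborel)"
    by (simp add: nn_integral_completion)
  also have "\<dots> \<le> ennreal B * L12norm D a"
    unfolding L by (rule key1b[OF A Wm B])
  finally show ?thesis .
qed

lemma L12_integrable:
  fixes a W :: "'a::euclidean_space \<times> 'a \<Rightarrow> real" and D :: "'a set"
  assumes a: "set_borel_measurable lebesgue (D\<times>D) a" and Wm[measurable]: "W \<in> borel_measurable borel"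
    and B: "B \<ge> 0" "\<And>x. (\<integral>\<^sup>+y. ennreal ((W (x,y))\<^sup>2) \<partial>lborel) \<le> ennreal (B\<^sup>2)"
    and fin: "L12norm D a < top"
  shows "set_integrable lebesgue (D\<times>D) (\<lambda>p. a p * W p)"
    and "ennreal \<bar>set_lebesgue_integral lebesgue (D\<times>D) (\<lambda>p. a p * W p)\<bar> \<le> ennreal B * L12norm D a"
proof -
  have m1: "(\<lambda>p. indicator (D\<times>D) p * a p) \<in> borel_measurable lebesgue"
    using a by (simp add: set_borel_measurable_def)
  have m2: "W \<in> borel_measurable lebesgue" by (rule borel_to_lebesgue) simp
  have eq: "\<And>p. indicator (D\<times>D) p *\<^sub>R (a p * W p) = indicator (D\<times>D) p * a p * W p" by simp
  have bnd: "(\<integral>\<^sup>+p. ennreal \<bar>indicator (D\<times>D) p * a p * W p\<bar> \<partial>lebesgue) \<le> ennreal B * L12norm D a"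
    by (rule L12_bound[OF a Wm B])
  also have "\<dots> < top" using fin by (simp add: ennreal_mult_less_top)
  finally have fin2: "(\<integral>\<^sup>+p. ennreal \<bar>indicator (D\<times>D) p * a p * W p\<bar> \<partial>lebesgue) < top" .
  show int: "set_integrable lebesgue (D\<times>D) (\<lambda>p. a p * W p)"
    unfolding set_integrable_def eq
    by (rule integrableI_bounded) (use m1 m2 fin2 in auto)
  have "ennreal \<bar>set_lebesgue_integral lebesgue (D\<times>D) (\<lambda>p. a p * W p)\<bar>
     \<le> (\<integral>\<^sup>+p. ennreal (norm (indicator (D\<times>D) p *\<^sub>R (a p * W p))) \<partial>lebesgue)"
    unfolding set_lebesgue_integral_def
    using integral_norm_bound_ennreal[OF int[unfolded set_integrable_def]] by simp
  also have "\<dots> = (\<integral>\<^sup>+p. ennreal \<bar>indicator (D\<times>D) p * a p * W p\<bar> \<partial>lebesgue)"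
    by (simp add: mult.assoc)
  finally show "ennreal \<bar>set_lebesgue_integral lebesgue (D\<times>D) (\<lambda>p. a p * W p)\<bar> \<le> ennreal B * L12norm D a"
    using bnd by simp
qed

lemma AE_measurable_completion:
  fixes f g :: "'b \<Rightarrow> 'c::topological_space"
  assumes g: "g \<in> borel_measurable (completion M)" and ae: "AE x in completion M. f x = g x"
  shows "f \<in> borel_measurable (completion M)"
proof (rule measurableI)
  fix x assume "x \<in> space (completion M)" then show "f x \<in> space borel" by simp
next
  fix A :: "'c set" assume A: "A \<in> sets borel"
  have gA: "g -` A \<inter> space (completion M) \<in> sets (completion M)"
    using g A by (rule measurable_sets)
  show "f -` A \<inter> space (completion M) \<in> sets (completion M)"
  proof (rule completion.in_sets_AE[OF _ gA])
    show "AE x in completion M. (x \<in> g -` A \<inter> space (completion M)) = (x \<in> f -` A \<inter> space (completion M))"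
      using ae by eventually_elim auto
  qed auto
qed

lemma integral_cong_AE_completion:
  fixes f g :: "'b \<Rightarrow> 'c::{banach, second_countable_topology}"
  assumes g: "g \<in> borel_measurable M" and ae: "AE x in M. f x = g x"
  shows "integral\<^sup>L (completion M) f = integral\<^sup>L M g"
proof -
  have gc: "g \<in> borel_measurable (completion M)" using g by (rule measurable_completion)
  have aec: "AE x in completion M. f x = g x" using ae by (rule AE_completion)
  have "f \<in> borel_measurable (completion M)" by (rule AE_measurable_completion[OF gc aec])
  then have "integral\<^sup>L (completion M) f = integral\<^sup>L (completion M) g"
    by (rule integral_cong_AE[OF _ gc aec])
  also have "\<dots> = integral\<^sup>L M g" by (rule integral_completion[OF g])
  finally show ?thesis .
qed

lemma meas_fst[measurable]: "(fst :: 'a::euclidean_space \<times> 'b::euclidean_space \<Rightarrow> 'a) \<in> borel_measurable borel"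
  by (rule borel_measurable_continuous_onI) (intro continuous_intros)
lemma meas_snd[measurable]: "(snd :: 'a::euclidean_space \<times> 'b::euclidean_space \<Rightarrow> 'b) \<in> borel_measurable borel"
  by (rule borel_measurable_continuous_onI) (intro continuous_intros)
lemma meas_diff[measurable]: "(\<lambda>p::'a::euclidean_space \<times> 'a. fst p - snd p) \<in> borel_measurable borel"
  by (rule borel_measurable_continuous_onI) (intro continuous_intros)
lemma meas_comp_diff[measurable]: "w \<in> borel_measurable borel \<Longrightarrow> (\<lambda>p::'a::euclidean_space \<times> 'a. w (fst p - snd p)) \<in> borel_measurable borel"
  using measurable_compose[OF meas_diff] by blast
lemma meas_comp_fst[measurable]: "w \<in> borel_measurable borel \<Longrightarrow> (\<lambda>p::'a::euclidean_space \<times> 'b::euclidean_space. w (fst p)) \<in> borel_measurable borel"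
  using measurable_compose[OF meas_fst] by blast
lemma meas_comp_snd[measurable]: "w \<in> borel_measurable borel \<Longrightarrow> (\<lambda>p::'a::euclidean_space \<times> 'b::euclidean_space. w (snd p)) \<in> borel_measurable borel"
  using measurable_compose[OF meas_snd] by blast

lemma key2:
  fixes q :: "'a::euclidean_space \<times> 'a \<Rightarrow> real" and D \<Omega> :: "'a set" and w :: "'a \<Rightarrow> real" and \<psi> :: "'a \<Rightarrow> 'a"
  assumes a: "set_borel_measurable lebesgue (D\<times>D) q" and fin: "L12norm D q < top"
    and wm[measurable]: "w \<in> borel_measurable borel" and \<psi>m[measurable]: "\<psi> \<in> borel_measurable borel"
    and M: "\<And>x. norm (\<psi> x) \<le> M"
    and B: "B \<ge> 0" "\<And>x. (\<integral>\<^sup>+y. ennreal ((norm (x - y) * w (x - y))\<^sup>2) \<partial>lborel) \<le> ennreal (B\<^sup>2)"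
    and \<Omega>D: "\<Omega> \<subseteq> D" and \<psi>0: "\<And>x. x \<notin> \<Omega> \<Longrightarrow> \<psi> x = 0"
  shows "set_lebesgue_integral lebesgue (D\<times>D) (\<lambda>p. q p * (w (fst p - snd p) * (\<psi> (fst p) \<bullet> (fst p - snd p))))
       = set_lebesgue_integral lebesgue \<Omega> (\<lambda>x. \<psi> x \<bullet> set_lebesgue_integral lebesgue D (\<lambda>x'. (q (x,x') * w (x - x')) *\<^sub>R (x - x')))"
proof -
  obtain A where A[measurable]: "A \<in> borel_measurable borel"
    and AE1: "AE p in (lborel::('a\<times>'a) measure). indicator (D\<times>D) p * q p = A p"
    and AE2: "AE x in lborel. AE y in lborel. indicator (D\<times>D) (x,y) * q (x,y) = A (x,y)"
    and L: "L12norm D q = (\<integral>\<^sup>+x. sqrtE (\<integral>\<^sup>+y. ennreal ((A (x,y))\<^sup>2) \<partial>lborel) \<partial>lborel)"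
    using borel_version[OF a] by blast
  define V where "V p = w (fst p - snd p) *\<^sub>R (fst p - snd p)" for p :: "'a \<times> 'a"
  define W where "W p = norm (V p)" for p
  have Vm[measurable]: "V \<in> borel_measurable borel" unfolding V_def by measurable
  have Wm[measurable]: "W \<in> borel_measurable borel" unfolding W_def by measurable
  have WB: "(\<integral>\<^sup>+y. ennreal ((W (x,y))\<^sup>2) \<partial>lborel) \<le> ennreal (B\<^sup>2)" for x
  proof -
    have "\<And>y. (W (x,y))\<^sup>2 = (norm (x - y) * w (x - y))\<^sup>2"
      by (simp add: W_def V_def power_mult_distrib mult.commute)
    then show ?thesis using B(2)[of x] by simp
  qed
  define F where "F p = A p *\<^sub>R V p" for p
  define G where "G p = \<psi> (fst p) \<bullet> F p" for p
  have Fm[measurable]: "F \<in> borel_measurable borel" unfolding F_def by measurable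
  have Gm[measurable]: "G \<in> borel_measurable borel" unfolding G_def by measurable
  have "(\<integral>\<^sup>+p. ennreal (norm (F p)) \<partial>lborel) = (\<integral>\<^sup>+p. ennreal \<bar>A p * W p\<bar> \<partial>lborel)"
    by (simp add: F_def W_def abs_mult)
  also have "\<dots> \<le> ennreal B * L12norm D q"
    unfolding L by (rule key1b[OF A Wm B(1) WB])
  also have "\<dots> < top" using fin by (simp add: ennreal_mult_less_top)
  finally have finF: "(\<integral>\<^sup>+p. ennreal (norm (F p)) \<partial>lborel) < top" .
  have intF0: "integrable lborel F"
    by (rule integrableI_bounded) (use finF in auto)
  then have intF: "integrable (lborel \<Otimes>\<^sub>M lborel) F" by (simp add: lborel_prod)
  have intG0: "integrable lborel G"
  proof (rule Bochner_Integration.integrable_bound)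
    show "integrable lborel (\<lambda>p. M *\<^sub>R F p)" using intF0 by simp
    show "AE p in lborel. norm (G p) \<le> norm (M *\<^sub>R F p)"
    proof (rule AE_I2)
      fix p
      have "norm (G p) \<le> norm (\<psi> (fst p)) * norm (F p)" unfolding G_def real_norm_def by (rule Cauchy_Schwarz_ineq2)
      also have "\<dots> \<le> M * norm (F p)" by (rule mult_right_mono[OF M]) simp
      also have "\<dots> \<le> norm (M *\<^sub>R F p)" by (simp add: mult_right_mono)
      finally show "norm (G p) \<le> norm (M *\<^sub>R F p)" .
    qed
  qed simp
  then have intG: "integrable (lborel \<Otimes>\<^sub>M lborel) G" by (simp add: lborel_prod)
  have "set_lebesgue_integral lebesgue (D\<times>D) (\<lambda>p. q p * (w (fst p - snd p) * (\<psi> (fst p) \<bullet> (fst p - snd p))))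
      = integral\<^sup>L lborel G"
    unfolding set_lebesgue_integral_def
  proof (rule integral_cong_AE_completion)
    show "G \<in> borel_measurable lborel" by simp
    show "AE p in lborel. indicator (D \<times> D) p *\<^sub>R (q p * (w (fst p - snd p) * (\<psi> (fst p) \<bullet> (fst p - snd p)))) = G p"
      using AE1 by eventually_elim (simp add: G_def F_def V_def)
  qed
  also have "\<dots> = integral\<^sup>L (lborel \<Otimes>\<^sub>M lborel) G" by (simp add: lborel_prod)
  also have "\<dots> = (\<integral>x. (\<integral>y. G (x,y) \<partial>lborel) \<partial>lborel)"
    by (rule lborel_pair.integral_fst'[OF intG, symmetric])
  also have "\<dots> = integral\<^sup>L lebesgue (\<lambda>x. indicator \<Omega> x *\<^sub>R (\<psi> x \<bullet> set_lebesgue_integral lebesgue D (\<lambda>x'. (q (x,x') * w (x - x')) *\<^sub>R (x - x'))))"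
  proof (rule integral_cong_AE_completion[symmetric])
    show "(\<lambda>x. \<integral>y. G (x,y) \<partial>lborel) \<in> borel_measurable lborel"
      by (rule lborel.borel_measurable_lebesgue_integral) (unfold lborel_prod, simp)
    show "AE x in lborel. indicator \<Omega> x *\<^sub>R (\<psi> x \<bullet> set_lebesgue_integral lebesgue D (\<lambda>x'. (q (x,x') * w (x - x')) *\<^sub>R (x - x'))) = (\<integral>y. G (x,y) \<partial>lborel)"
      using lborel_pair.AE_integrable_fst'[OF intF] AE2
    proof eventually_elim
      case (elim x)
      show ?case
      proof (cases "x \<in> \<Omega>")
        case False
        then show ?thesis by (simp add: G_def \<psi>0)
      next
        case True
        then have xD: "x \<in> D" using \<Omega>D by auto
        have "set_lebesgue_integral lebesgue D (\<lambda>x'. (q (x,x') * w (x - x')) *\<^sub>R (x - x')) = (\<integral>y. F (x,y) \<partial>lborel)"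
          unfolding set_lebesgue_integral_def
        proof (rule integral_cong_AE_completion)
          show "(\<lambda>y. F (x,y)) \<in> borel_measurable lborel" by simp
          show "AE y in lborel. indicator D y *\<^sub>R ((q (x,y) * w (x - y)) *\<^sub>R (x - y)) = F (x,y)"
            using elim(2) by eventually_elim (use xD in \<open>auto simp: F_def V_def indicator_def\<close>)
        qed
        moreover have "(\<integral>y. G (x,y) \<partial>lborel) = \<psi> x \<bullet> (\<integral>y. F (x,y) \<partial>lborel)"
          unfolding G_def using elim(1) by simp
        ultimately show ?thesis using True by simp
      qed
    qed
  qed
  also have "\<dots> = set_lebesgue_integral lebesgue \<Omega> (\<lambda>x. \<psi> x \<bullet> set_lebesgue_integral lebesgue D (\<lambda>x'. (q (x,x') * w (x - x')) *\<^sub>R (x - x')))"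
    by (simp add: set_lebesgue_integral_def)
  finally show ?thesis .
qed

lemma K2n_pos: "K2n TYPE('a::euclidean_space) > 0"
proof -
  define e :: 'a where "e = (SOME b. b \<in> Basis)"
  have eB: "e \<in> Basis" unfolding e_def by (rule someI_ex) (use nonempty_Basis in blast)
  have ne: "norm e = 1" using eB by simp
  have ee: "e \<bullet> e = 1" using eB by simp
  define h where "h x = ((x /\<^sub>R norm x) \<bullet> e)\<^sup>2" for x :: 'a
  define b2 where "b2 = ball ((1/2) *\<^sub>R e) (1/4)"
  have hm0: "h \<in> borel_measurable borel" unfolding h_def by measurable
  have hm[measurable]: "h \<in> borel_measurable lebesgue" by (rule borel_to_lebesgue[OF hm0])
  have b2sub: "b2 \<subseteq> ball 0 1"
  proof
    fix x assume "x \<in> b2"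
    then have "norm (x - (1/2) *\<^sub>R e) < 1/4" by (simp add: b2_def dist_norm norm_minus_commute)
    moreover have "norm x \<le> norm (x - (1/2) *\<^sub>R e) + norm ((1/2) *\<^sub>R e)" using norm_triangle_ineq[of "x - (1/2) *\<^sub>R e" "(1/2) *\<^sub>R e"] by simp
    ultimately show "x \<in> ball 0 1" using ne by simp
  qed
  have hb: "(1/9) * indicator b2 x \<le> indicator (ball 0 1) x *\<^sub>R h x" for x
  proof (cases "x \<in> b2")
    case True
    then have d: "norm (x - (1/2) *\<^sub>R e) < 1/4" by (simp add: b2_def dist_norm norm_minus_commute)
    have "norm x \<le> norm (x - (1/2) *\<^sub>R e) + norm ((1/2) *\<^sub>R e)" using norm_triangle_ineq[of "x - (1/2) *\<^sub>R e" "(1/2) *\<^sub>R e"] by simp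
    then have nx: "norm x \<le> 3/4" using d ne by simp
    have "\<bar>(x - (1/2) *\<^sub>R e) \<bullet> e\<bar> \<le> norm (x - (1/2) *\<^sub>R e) * norm e" by (rule Cauchy_Schwarz_ineq2)
    then have "\<bar>(x - (1/2) *\<^sub>R e) \<bullet> e\<bar> \<le> 1/4" using d ne by simp
    moreover have "(x - (1/2) *\<^sub>R e) \<bullet> e = x \<bullet> e - 1/2" using ee by (simp add: inner_diff_left)
    ultimately have xe: "x \<bullet> e \<ge> 1/4" by linarith
    have "x \<noteq> 0" using xe by auto
    then have npos: "norm x > 0" by simp
    have "(x /\<^sub>R norm x) \<bullet> e = (x \<bullet> e) / norm x" by (simp add: divide_inverse_commute)
    also have "\<dots> \<ge> (1/4) / (3/4)" using xe nx npos
      by (intro frac_le) auto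
    finally have "(x /\<^sub>R norm x) \<bullet> e \<ge> 1/3" by simp
    then have "h x \<ge> (1/3)\<^sup>2" unfolding h_def by (intro power_mono) auto
    then show ?thesis using True b2sub by (auto simp: power2_eq_square)
  next
    case False
    then show ?thesis by (simp add: h_def)
  qed
  have int1: "integrable lebesgue (\<lambda>x. (1/9) * indicator b2 x :: real)"
    unfolding b2_def using emeasure_lborel_ball_finite[of "(1/2) *\<^sub>R e" "1/4"]
    by (intro integrable_mult_right) (simp add: integrable_indicator_iff)
  have int2: "integrable lebesgue (\<lambda>x. indicator (ball 0 1) x *\<^sub>R h x)"
  proof (rule Bochner_Integration.integrable_bound)
    show "integrable lebesgue (\<lambda>x. indicator (ball (0::'a) 1) x :: real)"
      using emeasure_lborel_ball_finite[of "0::'a" 1] by (simp add: integrable_indicator_iff)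
    show "(\<lambda>x. indicator (ball 0 1) x *\<^sub>R h x) \<in> borel_measurable lebesgue"
      by (intro borel_measurable_scaleR borel_measurable_indicator hm) (rule sets_completionI_sets, simp)
    show "AE x in lebesgue. norm (indicator (ball 0 1) x *\<^sub>R h x) \<le> norm (indicator (ball (0::'a) 1) x :: real)"
    proof (rule AE_I2)
      fix x :: 'a
      have "\<bar>(x /\<^sub>R norm x) \<bullet> e\<bar> \<le> norm (x /\<^sub>R norm x) * norm e" by (rule Cauchy_Schwarz_ineq2)
      also have "\<dots> \<le> 1" using ne by (cases "x = 0") auto
      finally have "h x \<le> 1" unfolding h_def using abs_square_le_1 by blast
      moreover have "h x \<ge> 0" by (simp add: h_def)
      ultimately show "norm (indicator (ball 0 1) x *\<^sub>R h x) \<le> norm (indicator (ball (0::'a) 1) x :: real)"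
        by (simp add: indicator_def)
    qed
  qed
  have "integral\<^sup>L lebesgue (\<lambda>x. (1/9) * indicator b2 x :: real) \<le> integral\<^sup>L lebesgue (\<lambda>x. indicator (ball 0 1) x *\<^sub>R h x)"
    by (rule integral_mono[OF int1 int2 hb])
  moreover have "integral\<^sup>L lebesgue (\<lambda>x. (1/9) * indicator b2 x :: real) = (1/9) * measure lebesgue b2"
    unfolding b2_def by simp
  moreover have "measure lebesgue b2 > 0"
    unfolding b2_def using content_ball_pos[of "1/4" "(1/2) *\<^sub>R e"] by (simp add: measure_completion)
  ultimately have num: "set_lebesgue_integral lebesgue (ball 0 1) h > 0"
    unfolding set_lebesgue_integral_def by simp
  have den: "measure lebesgue (ball (0::'a) 1) > 0"
    using content_ball_pos[of "1" "0::'a"] by (simp add: measure_completion)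
  show ?thesis unfolding K2n_def Let_def e_def[symmetric] h_def[symmetric]
    using num den by simp
qed

lemma kernel_nn:
  fixes \<omega> :: "real \<Rightarrow> 'a::euclidean_space \<Rightarrow> real"
  assumes kern: "admissible_kernels dbar \<omega>" and d: "0 < d" "d < dbar"
  shows "(\<integral>\<^sup>+y. ennreal ((norm (x - y) * \<omega> d (x - y))\<^sup>2) \<partial>lborel) = ennreal (inverse (K2n TYPE('a)))"
proof -
  have wm[measurable]: "\<omega> d \<in> borel_measurable borel"
    and rad: "\<And>z w. norm z = norm w \<Longrightarrow> \<omega> d z = \<omega> d w"
    and I: "integral\<^sup>L lebesgue (\<lambda>z. (norm z)\<^sup>2 * (\<omega> d z)\<^sup>2) = inverse (K2n TYPE('a))"
    using kern d unfolding admissible_kernels_def by blast+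
  define g where "g z = (norm z * \<omega> d z)\<^sup>2" for z :: 'a
  have gm[measurable]: "g \<in> borel_measurable borel" unfolding g_def by measurable
  have gI: "integral\<^sup>L lebesgue g = inverse (K2n TYPE('a))"
  proof -
    have "g = (\<lambda>z. (norm z)\<^sup>2 * (\<omega> d z)\<^sup>2)" by (rule ext) (simp add: g_def power_mult_distrib)
    then show ?thesis using I by simp
  qed
  have "inverse (K2n TYPE('a)) \<noteq> 0" using K2n_pos[where 'a='a] by simp
  then have intg: "integrable lebesgue g" using gI not_integrable_integral_eq by metis
  have "(\<integral>\<^sup>+z. ennreal (g z) \<partial>lebesgue) = ennreal (integral\<^sup>L lebesgue g)"
    by (rule nn_integral_eq_integral[OF intg]) (simp add: g_def)
  then have gN: "(\<integral>\<^sup>+z. ennreal (g z) \<partial>lborel) = ennreal (inverse (K2n TYPE('a)))"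
    using gI by (simp add: nn_integral_completion)
  have "(\<integral>\<^sup>+y. ennreal ((norm (x - y) * \<omega> d (x - y))\<^sup>2) \<partial>lborel) = (\<integral>\<^sup>+y. ennreal (g ((- x) + y)) \<partial>lborel)"
  proof (rule nn_integral_cong)
    fix y
    have "norm (x - y) = norm (-x + y)" by (metis add.commute norm_minus_commute uminus_add_conv_diff)
    then show "ennreal ((norm (x - y) * \<omega> d (x - y))\<^sup>2) = ennreal (g (- x + y))"
      unfolding g_def using rad[of "x - y" "- x + y"] by simp
  qed
  also have "\<dots> = (\<integral>\<^sup>+z. ennreal (g z) \<partial>distr lborel borel ((+) (- x)))"
    by (rule nn_integral_distr[symmetric]) auto
  also have "\<dots> = (\<integral>\<^sup>+z. ennreal (g z) \<partial>lborel)" by (simp add: lborel_distr_plus)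
  finally show ?thesis using gN by simp
qed

context
  fixes \<Omega> :: "'a::euclidean_space set" and \<phi> :: "'a \<Rightarrow> real" and g :: "'a \<Rightarrow> 'a" and K :: "'a set"
  assumes opn: "open \<Omega>"
    and der: "\<forall>x\<in>\<Omega>. (\<phi> has_derivative (\<lambda>v. g x \<bullet> v)) (at x)"
    and gc: "continuous_on \<Omega> g"
    and K: "compact K" "K \<subseteq> \<Omega>" "\<forall>x\<in>\<Omega> - K. \<phi> x = 0"
begin

definition "psi x = (if x \<in> \<Omega> then g x else 0)"

lemma g_zero: "x \<in> \<Omega> \<Longrightarrow> x \<notin> K \<Longrightarrow> g x = 0"
proof -
  assume x: "x \<in> \<Omega>" "x \<notin> K"
  have o: "open (\<Omega> - K)" using opn K(1) by (simp add: compact_imp_closed open_Diff)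
  have d1: "(\<phi> has_derivative (\<lambda>v. g x \<bullet> v)) (at x)" using der x by auto
  have "((\<lambda>_. 0::real) has_derivative (\<lambda>v. 0)) (at x)" by simp
  then have d2: "(\<phi> has_derivative (\<lambda>v. 0)) (at x)"
    by (rule has_derivative_transform_within_open[OF _ o]) (use x K(3) in auto)
  have "(\<lambda>v. g x \<bullet> v) = (\<lambda>v. 0)" by (rule has_derivative_unique[OF d1 d2])
  then have "g x \<bullet> g x = 0" by metis
  then show "g x = 0" by simp
qed

lemma psi_zero: "x \<notin> K \<Longrightarrow> psi x = 0"
  using g_zero by (auto simp: psi_def)

lemma Phi_zero: "x \<notin> K \<Longrightarrow> ext0 \<Omega> \<phi> x = 0"
  using K(3) by (auto simp: ext0_def)

lemma Phi_deriv: "(ext0 \<Omega> \<phi> has_derivative (\<lambda>v. psi x \<bullet> v)) (at x)"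
proof (cases "x \<in> \<Omega>")
  case True
  have "(\<phi> has_derivative (\<lambda>v. g x \<bullet> v)) (at x)" using der True by auto
  then have "(ext0 \<Omega> \<phi> has_derivative (\<lambda>v. g x \<bullet> v)) (at x)"
    by (rule has_derivative_transform_within_open[OF _ opn True]) (simp add: ext0_def)
  then show ?thesis using True by (simp add: psi_def)
next
  case False
  then have xK: "x \<notin> K" using K(2) by auto
  have o: "open (- K)" using K(1) by (simp add: compact_imp_closed open_Compl)
  have "((\<lambda>_. 0::real) has_derivative (\<lambda>v. 0)) (at x)" by simp
  then have "(ext0 \<Omega> \<phi> has_derivative (\<lambda>v. 0)) (at x)"
    by (rule has_derivative_transform_within_open[OF _ o]) (use xK Phi_zero in auto)
  then show ?thesis using False by (simp add: psi_def)
qed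

lemma psi_cont: "continuous_on UNIV psi"
proof -
  have o: "open (- K)" using K(1) by (simp add: compact_imp_closed open_Compl)
  have c1: "continuous_on \<Omega> psi"
    using gc by (rule continuous_on_eq) (simp add: psi_def)
  have c2: "continuous_on (- K) psi"
    by (rule continuous_on_eq[OF continuous_on_const[of _ 0]]) (simp add: psi_zero)
  have "continuous_on (\<Omega> \<union> - K) psi" by (rule continuous_on_open_Un[OF opn o c1 c2])
  moreover have "\<Omega> \<union> - K = UNIV" using K(2) by auto
  ultimately show ?thesis by simp
qed

lemma Phi_cont: "continuous_on UNIV (ext0 \<Omega> \<phi>)"
  using Phi_deriv by (meson continuous_at_imp_continuous_on has_derivative_continuous)

lemma bounded_outside_K:
  fixes f :: "'a \<Rightarrow> 'b::real_normed_vector"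
  assumes "continuous_on UNIV f" "\<And>x. x \<notin> K \<Longrightarrow> f x = 0"
  shows "\<exists>M\<ge>0. \<forall>x. norm (f x) \<le> M"
proof -
  have "compact (f ` K)" by (rule compact_continuous_image[OF continuous_on_subset[OF assms(1)] K(1)]) simp
  then obtain M where M: "\<forall>y\<in>f ` K. norm y \<le> M" using compact_imp_bounded bounded_iff by metis
  show ?thesis
  proof (intro exI[of _ "max M 0"] conjI allI)
    fix x show "norm (f x) \<le> max M 0" using M assms(2)[of x] by (cases "x \<in> K") auto
  qed simp
qed

lemma psi_bounded: "\<exists>M\<ge>0. \<forall>x. norm (psi x) \<le> M"
  by (rule bounded_outside_K[OF psi_cont psi_zero])

lemma Phi_bounded: "\<exists>M\<ge>0. \<forall>x. \<bar>ext0 \<Omega> \<phi> x\<bar> \<le> M"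
  using bounded_outside_K[OF Phi_cont Phi_zero] by simp

lemma psi_unif: "\<forall>e>0. \<exists>d>0. \<forall>x y. norm (y - x) < d \<longrightarrow> norm (psi y - psi x) < e"
proof (intro allI impI)
  fix e :: real assume e: "e > 0"
  obtain R where R0: "\<forall>x\<in>K. norm x \<le> R" using compact_imp_bounded[OF K(1)] unfolding bounded_iff by blast
  then have R: "K \<subseteq> cball 0 R" by (auto simp: mem_cball_0)
  have "uniformly_continuous_on (cball 0 (R+1)) psi"
    by (rule compact_uniformly_continuous[OF continuous_on_subset[OF psi_cont]]) (simp_all add: compact_cball)
  then have "\<exists>d>0. \<forall>x\<in>cball 0 (R+1). \<forall>y\<in>cball 0 (R+1). dist y x < d \<longrightarrow> dist (psi y) (psi x) < e"
    using e unfolding uniformly_continuous_on_def by blast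
  then obtain d where d: "d > 0" "\<forall>x\<in>cball 0 (R+1). \<forall>y\<in>cball 0 (R+1). dist y x < d \<longrightarrow> dist (psi y) (psi x) < e"
    by blast
  show "\<exists>d>0. \<forall>x y. norm (y - x) < d \<longrightarrow> norm (psi y - psi x) < e"
  proof (intro exI[of _ "min d 1"] conjI allI impI)
    fix x y :: 'a assume xy: "norm (y - x) < min d 1"
    show "norm (psi y - psi x) < e"
    proof (cases "x \<in> cball 0 (R+1) \<and> y \<in> cball 0 (R+1)")
      case True
      then have "dist y x < d \<longrightarrow> dist (psi y) (psi x) < e" using d(2) by blast
      then show ?thesis using xy by (simp add: dist_norm)
    next
      case False
      have nc: "norm (x - y) = norm (y - x)" by (rule norm_minus_commute)
      have tri: "norm x \<le> norm y + norm (y - x)" "norm y \<le> norm x + norm (y - x)"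
        using norm_triangle_sub[of x y] norm_triangle_sub[of y x] nc by linarith+
      have "norm x > R+1 \<or> norm y > R+1" using False by (auto simp: mem_cball_0 not_le)
      then have "norm x > R \<and> norm y > R" using xy tri by linarith
      then have "x \<notin> K" "y \<notin> K" using R by auto
      then show ?thesis using e psi_zero by simp
    qed
  qed (use d in auto)
qed

lemma Phi_taylor: "\<forall>e>0. \<exists>d>0. \<forall>x y. norm (y - x) < d \<longrightarrow>
    \<bar>ext0 \<Omega> \<phi> y - ext0 \<Omega> \<phi> x - psi x \<bullet> (y - x)\<bar> \<le> e * norm (y - x)"
proof (intro allI impI)
  fix e :: real assume e: "e > 0"
  obtain d where d: "d > 0" "\<forall>x y. norm (y - x) < d \<longrightarrow> norm (psi y - psi x) < e"
    using psi_unif e by blast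
  show "\<exists>d>0. \<forall>x y. norm (y - x) < d \<longrightarrow> \<bar>ext0 \<Omega> \<phi> y - ext0 \<Omega> \<phi> x - psi x \<bullet> (y - x)\<bar> \<le> e * norm (y - x)"
  proof (intro exI[of _ d] conjI allI impI)
    fix x y :: 'a assume xy: "norm (y - x) < d"
    define f where "f z = ext0 \<Omega> \<phi> z - psi x \<bullet> z" for z
    have fd: "(f has_derivative (\<lambda>v. (psi z - psi x) \<bullet> v)) (at z within ball x d)" for z
    proof -
      have "(f has_derivative (\<lambda>v. psi z \<bullet> v - psi x \<bullet> v)) (at z)"
        unfolding f_def by (intro derivative_intros Phi_deriv)
      then show ?thesis by (simp add: inner_diff_left has_derivative_at_withinI)
    qed
    have fb: "onorm (\<lambda>v. (psi z - psi x) \<bullet> v) \<le> e" if "z \<in> ball x d" for z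
    proof (rule onorm_le)
      fix v
      have "norm ((psi z - psi x) \<bullet> v) \<le> norm (psi z - psi x) * norm v"
        unfolding real_norm_def by (rule Cauchy_Schwarz_ineq2)
      also have "\<dots> \<le> e * norm v"
        using d(2) that by (intro mult_right_mono) (auto simp: dist_norm norm_minus_commute less_imp_le)
      finally show "norm ((psi z - psi x) \<bullet> v) \<le> e * norm v" .
    qed
    have "norm (f y - f x) \<le> e * norm (y - x)"
      by (rule differentiable_bound[OF convex_ball fd fb]) (use xy d in \<open>auto simp: dist_norm norm_minus_commute\<close>)
    then show "\<bar>ext0 \<Omega> \<phi> y - ext0 \<Omega> \<phi> x - psi x \<bullet> (y - x)\<bar> \<le> e * norm (y - x)"
      by (simp add: f_def inner_diff_right algebra_simps)
  qed (use d in auto)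
qed

lemma Phi_lipschitz: "\<exists>L\<ge>0. \<forall>x y. \<bar>ext0 \<Omega> \<phi> x - ext0 \<Omega> \<phi> y\<bar> \<le> L * norm (x - y)"
proof -
  obtain M where M: "M \<ge> 0" "\<forall>x. norm (psi x) \<le> M" using psi_bounded by blast
  have fd: "(ext0 \<Omega> \<phi> has_derivative (\<lambda>v. psi z \<bullet> v)) (at z within UNIV)" for z
    using Phi_deriv by simp
  have fb: "onorm (\<lambda>v. psi z \<bullet> v) \<le> M" if "z \<in> UNIV" for z
  proof (rule onorm_le)
    fix v
    have "norm (psi z \<bullet> v) \<le> norm (psi z) * norm v"
      unfolding real_norm_def by (rule Cauchy_Schwarz_ineq2)
    also have "\<dots> \<le> M * norm v" using M by (intro mult_right_mono) auto
    finally show "norm (psi z \<bullet> v) \<le> M * norm v" .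
  qed
  have "\<bar>ext0 \<Omega> \<phi> x - ext0 \<Omega> \<phi> y\<bar> \<le> M * norm (x - y)" for x y
    using differentiable_bound[OF convex_UNIV fd fb UNIV_I UNIV_I] by (simp only: real_norm_def)
  then show ?thesis using M(1) by (intro exI[of _ M]) simp
qed

end

lemma enn_tendsto_zero:
  fixes x :: "nat \<Rightarrow> real"
  assumes le: "\<And>j. ennreal \<bar>x j\<bar> \<le> y j" and y: "y \<longlonglongrightarrow> 0"
  shows "x \<longlonglongrightarrow> 0"
proof -
  have "(\<lambda>j. ennreal \<bar>x j\<bar>) \<longlonglongrightarrow> 0"
    by (rule tendsto_sandwich[OF _ _ tendsto_const y]) (use le in auto)
  then have "(\<lambda>j. enn2real (ennreal \<bar>x j\<bar>)) \<longlonglongrightarrow> 0"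
    using tendsto_enn2real[of "\<lambda>j. ennreal \<bar>x j\<bar>" 0] by simp
  then have "(\<lambda>j. \<bar>x j\<bar>) \<longlonglongrightarrow> 0" by simp
  then show ?thesis by (simp add: tendsto_rabs_zero_iff)
qed

lemma sqrtE_tendsto_zero:
  assumes e: "e \<longlonglongrightarrow> 0"
  shows "(\<lambda>j. sqrtE (e j)) \<longlonglongrightarrow> 0"
proof -
  have ev: "eventually (\<lambda>j. e j < 1) sequentially"
    using e by (rule order_tendstoD) simp
  have "(\<lambda>j. enn2real (e j)) \<longlonglongrightarrow> 0"
    using tendsto_enn2real[of e 0] e by simp
  then have "(\<lambda>j. sqrt (enn2real (e j))) \<longlonglongrightarrow> 0"
    using tendsto_real_sqrt by fastforce
  then have t: "(\<lambda>j. ennreal (sqrt (enn2real (e j)))) \<longlonglongrightarrow> 0"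
    using tendsto_ennrealI by fastforce
  show ?thesis
  proof (rule Lim_transform_eventually[OF t])
    show "eventually (\<lambda>j. ennreal (sqrt (enn2real (e j))) = sqrtE (e j)) sequentially"
      using ev by eventually_elim (auto simp: sqrtE_def)
  qed
qed

lemma abs_mult_le_sq: "\<bar>(a::real) * b\<bar> \<le> a\<^sup>2 + b\<^sup>2"
proof -
  have "0 \<le> (\<bar>a\<bar> - \<bar>b\<bar>)\<^sup>2" by simp
  then have "2 * (\<bar>a\<bar> * \<bar>b\<bar>) \<le> a\<^sup>2 + b\<^sup>2" by (simp add: power2_eq_square algebra_simps)
  moreover have "\<bar>a * b\<bar> = \<bar>a\<bar> * \<bar>b\<bar>" by (simp add: abs_mult)
  moreover have "\<bar>a\<bar> * \<bar>b\<bar> \<ge> 0" by simp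
  ultimately show ?thesis by linarith
qed

lemma L2_prod:
  fixes S :: "'b::euclidean_space set"
  assumes u: "L2on S u" and v: "L2on S v"
  shows "set_integrable lebesgue S (\<lambda>x. u x * v x)"
proof -
  have mu: "(\<lambda>x. indicator S x *\<^sub>R u x) \<in> borel_measurable lebesgue"
   and iu: "integrable lebesgue (\<lambda>x. indicator S x *\<^sub>R (u x)\<^sup>2)"
    using u unfolding L2on_def set_borel_measurable_def set_integrable_def by auto
  have mv: "(\<lambda>x. indicator S x *\<^sub>R v x) \<in> borel_measurable lebesgue"
   and iv: "integrable lebesgue (\<lambda>x. indicator S x *\<^sub>R (v x)\<^sup>2)"
    using v unfolding L2on_def set_borel_measurable_def set_integrable_def by auto
  have eq: "(\<lambda>x. indicator S x *\<^sub>R (u x * v x)) = (\<lambda>x. (indicator S x *\<^sub>R u x) * (indicator S x *\<^sub>R v x))"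
    by (auto simp: indicator_def)
  show ?thesis unfolding set_integrable_def
  proof (rule Bochner_Integration.integrable_bound)
    show "integrable lebesgue (\<lambda>x. indicator S x *\<^sub>R (u x)\<^sup>2 + indicator S x *\<^sub>R (v x)\<^sup>2)"
      using iu iv by (rule Bochner_Integration.integrable_add)
    show "(\<lambda>x. indicator S x *\<^sub>R (u x * v x)) \<in> borel_measurable lebesgue"
      unfolding eq using mu mv by (rule borel_measurable_times)
    show "AE x in lebesgue. norm (indicator S x *\<^sub>R (u x * v x)) \<le> norm (indicator S x *\<^sub>R (u x)\<^sup>2 + indicator S x *\<^sub>R (v x)\<^sup>2)"
    proof (rule AE_I2)
      fix x
      show "norm (indicator S x *\<^sub>R (u x * v x)) \<le> norm (indicator S x *\<^sub>R (u x)\<^sup>2 + indicator S x *\<^sub>R (v x)\<^sup>2)"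
        using abs_mult_le_sq[of "u x" "v x"] by (auto simp: indicator_def)
    qed
  qed
qed

lemma W_bound:
  fixes \<omega> :: "real \<Rightarrow> 'a::euclidean_space \<Rightarrow> real" and W :: "'a \<times> 'a \<Rightarrow> real"
  assumes kern: "admissible_kernels dbar \<omega>" and d: "0 < d" "d < dbar" and c: "c \<ge> 0"
    and Wle: "\<And>x y. \<bar>W (x,y)\<bar> \<le> c * (norm (x - y) * \<omega> d (x - y))"
  shows "(\<integral>\<^sup>+y. ennreal ((W (x,y))\<^sup>2) \<partial>lborel) \<le> ennreal ((c * sqrt (inverse (K2n TYPE('a))))\<^sup>2)"
proof -
  have wm[measurable]: "\<omega> d \<in> borel_measurable borel"
    using kern d unfolding admissible_kernels_def by blast
  have w0: "\<And>z. \<omega> d z \<ge> 0" using kern d unfolding admissible_kernels_def by blast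
  have Kp: "K2n TYPE('a) > 0" by (rule K2n_pos)
  have "(\<integral>\<^sup>+y. ennreal ((W (x,y))\<^sup>2) \<partial>lborel) \<le> (\<integral>\<^sup>+y. ennreal (c\<^sup>2) * ennreal ((norm (x - y) * \<omega> d (x - y))\<^sup>2) \<partial>lborel)"
  proof (rule nn_integral_mono)
    fix y
    have a: "\<bar>W (x,y)\<bar> \<le> c * (norm (x - y) * \<omega> d (x - y))" by (rule Wle)
    have "(W (x,y))\<^sup>2 = \<bar>W (x,y)\<bar>\<^sup>2" by simp
    also have "\<dots> \<le> (c * (norm (x - y) * \<omega> d (x - y)))\<^sup>2"
      by (rule power_mono[OF a]) simp
    finally show "ennreal ((W (x,y))\<^sup>2) \<le> ennreal (c\<^sup>2) * ennreal ((norm (x - y) * \<omega> d (x - y))\<^sup>2)"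
      by (simp add: ennreal_mult[symmetric] power_mult_distrib)
  qed
  also have "\<dots> = ennreal (c\<^sup>2) * (\<integral>\<^sup>+y. ennreal ((norm (x - y) * \<omega> d (x - y))\<^sup>2) \<partial>lborel)"
    by (rule nn_integral_cmult) measurable
  also have "\<dots> = ennreal (c\<^sup>2) * ennreal (inverse (K2n TYPE('a)))"
    using kernel_nn[OF kern d] by simp
  also have "\<dots> = ennreal ((c * sqrt (inverse (K2n TYPE('a))))\<^sup>2)"
    using Kp by (simp add: ennreal_mult[symmetric] power_mult_distrib)
  finally show ?thesis .
qed

lemma Omega_d_facts:
  fixes \<Omega> :: "'a::euclidean_space set"
  assumes b: "bounded \<Omega>" and d: "d > 0"
  shows "open (Omega_d \<Omega> d)" "\<Omega> \<subseteq> Omega_d \<Omega> d" "bounded (Omega_d \<Omega> d)"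
proof -
  show "open (Omega_d \<Omega> d)" unfolding Omega_d_def by (intro open_UN) auto
  show "\<Omega> \<subseteq> Omega_d \<Omega> d" unfolding Omega_d_def using d by auto
  obtain R where R: "\<forall>x\<in>\<Omega>. norm x \<le> R" using b unfolding bounded_iff by blast
  have "\<forall>y\<in>Omega_d \<Omega> d. norm y \<le> R + d"
  proof
    fix y assume "y \<in> Omega_d \<Omega> d"
    then obtain x where x: "x \<in> \<Omega>" "dist x y < d" unfolding Omega_d_def by auto
    have "norm y \<le> norm x + norm (y - x)" using norm_triangle_sub[of y x] by simp
    moreover have "norm (y - x) = dist x y" by (simp add: dist_norm norm_minus_commute)
    ultimately show "norm y \<le> R + d" using R x by fastforce
  qed
  then show "bounded (Omega_d \<Omega> d)" unfolding bounded_iff by blast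
qed

lemma ind_sets_lebesgue: "open (S::'a::euclidean_space set) \<Longrightarrow> S \<in> sets lebesgue"
  by (rule sets_completionI_sets) simp

lemma finite_emeasure_lebesgue: "bounded (S::'a::euclidean_space set) \<Longrightarrow> open S \<Longrightarrow> emeasure lebesgue S < top"
  using emeasure_bounded_finite[of S] by (simp add: emeasure_completion)

lemma duality:
  fixes \<Omega> :: "'a::euclidean_space set" and \<omega> :: "real \<Rightarrow> 'a \<Rightarrow> real" and f \<phi> :: "'a \<Rightarrow> real"
    and q :: "'a \<times> 'a \<Rightarrow> real" and g :: "'a \<Rightarrow> 'a" and K :: "'a set"
  assumes kern: "admissible_kernels dbar \<omega>" and d: "0 < d" "d < dbar"
    and \<Omega>b: "bounded \<Omega>" and opn: "open \<Omega>"
    and f: "L2on \<Omega> f" and qQ: "q \<in> Qbar \<Omega> \<omega> d f"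
    and der: "\<forall>x\<in>\<Omega>. (\<phi> has_derivative (\<lambda>v. g x \<bullet> v)) (at x)"
    and gc: "continuous_on \<Omega> g"
    and K: "compact K" "K \<subseteq> \<Omega>" "\<forall>x\<in>\<Omega> - K. \<phi> x = 0"
  shows "set_lebesgue_integral lebesgue \<Omega> (\<lambda>x. f x * \<phi> x)
       = - set_lebesgue_integral lebesgue (Omega_d \<Omega> d \<times> Omega_d \<Omega> d) (\<lambda>p. q p * Gop \<Omega> \<omega> d \<phi> p)"
proof -
  define D where "D = Omega_d \<Omega> d"
  define \<Phi> where "\<Phi> = ext0 \<Omega> \<phi>"
  define Bk where "Bk = sqrt (inverse (K2n TYPE('a)))"
  define G where "G = Gop \<Omega> \<omega> d \<phi>"
  have Dopen: "open D" and \<Omega>D: "\<Omega> \<subseteq> D" and Db: "bounded D"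
    using Omega_d_facts[OF \<Omega>b d(1)] by (auto simp: D_def)
  have Bk0: "Bk \<ge> 0" using K2n_pos[where 'a='a] by (simp add: Bk_def)
  obtain L where L: "L \<ge> 0" "\<And>x y. \<bar>\<Phi> x - \<Phi> y\<bar> \<le> L * norm (x - y)"
    using Phi_lipschitz[OF opn der gc K] unfolding \<Phi>_def by blast
  obtain M where M: "M \<ge> 0" "\<And>x. \<bar>\<Phi> x\<bar> \<le> M"
    using Phi_bounded[OF opn der gc K] unfolding \<Phi>_def by blast
  have \<Phi>m[measurable]: "\<Phi> \<in> borel_measurable borel"
    unfolding \<Phi>_def by (rule borel_measurable_continuous_onI[OF Phi_cont[OF opn der gc K]])
  have wm[measurable]: "\<omega> d \<in> borel_measurable borel" and w0: "\<And>z. \<omega> d z \<ge> 0"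
    using kern d unfolding admissible_kernels_def by blast+
  have G_eq: "G = (\<lambda>p. (\<Phi> (fst p) - \<Phi> (snd p)) * \<omega> d (fst p - snd p))"
    by (rule ext) (simp add: G_def Gop_def \<Phi>_def)
  have Gm[measurable]: "G \<in> borel_measurable borel" unfolding G_eq by measurable
  have Gle: "\<bar>G (x,y)\<bar> \<le> L * (norm (x - y) * \<omega> d (x - y))" for x y
  proof -
    have "\<bar>G (x,y)\<bar> = \<bar>\<Phi> x - \<Phi> y\<bar> * \<omega> d (x - y)" using w0 by (simp add: G_eq abs_mult)
    also have "\<dots> \<le> L * norm (x - y) * \<omega> d (x - y)" by (rule mult_right_mono[OF L(2) w0])
    finally show ?thesis by (simp add: mult.assoc)
  qed
  have GW: "(\<integral>\<^sup>+y. ennreal ((G (x,y))\<^sup>2) \<partial>lborel) \<le> ennreal ((L * Bk)\<^sup>2)" for x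
    unfolding Bk_def by (rule W_bound[OF kern d L(1) Gle])
  have LB0: "L * Bk \<ge> 0" using L(1) Bk0 by simp
  have \<Omega>leb: "\<Omega> \<in> sets lebesgue" by (rule ind_sets_lebesgue[OF opn])
  have \<Omega>fin: "emeasure lebesgue \<Omega> < top" by (rule finite_emeasure_lebesgue[OF \<Omega>b opn])
  have Dfin: "emeasure lborel D < top" using emeasure_bounded_finite[OF Db] by simp
  have DDb: "D \<times> D \<in> sets borel" using Dopen by (simp add: open_Times)
  have ind\<phi>: "(\<lambda>x. indicator \<Omega> x *\<^sub>R \<phi> x) = \<Phi>"
    by (rule ext) (simp add: \<Phi>_def ext0_def indicator_def)
  have L2\<phi>: "L2on \<Omega> \<phi>"
    unfolding L2on_def
  proof
    show "set_borel_measurable lebesgue \<Omega> \<phi>"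
      unfolding set_borel_measurable_def ind\<phi> by (rule borel_to_lebesgue[OF \<Phi>m])
    show "set_integrable lebesgue \<Omega> (\<lambda>x. (\<phi> x)\<^sup>2)"
      unfolding set_integrable_def
    proof (rule Bochner_Integration.integrable_bound)
      show "integrable lebesgue (\<lambda>x. M\<^sup>2 * indicator \<Omega> x :: real)"
        using \<Omega>leb \<Omega>fin by (intro integrable_mult_right) (simp add: integrable_indicator_iff)
      have "(\<lambda>x. indicator \<Omega> x *\<^sub>R (\<phi> x)\<^sup>2) = (\<lambda>x. (\<Phi> x)\<^sup>2)"
        by (rule ext) (simp add: \<Phi>_def ext0_def indicator_def)
      moreover have "(\<lambda>x. (\<Phi> x)\<^sup>2) \<in> borel_measurable lebesgue" by (rule borel_to_lebesgue) measurable
      ultimately show "(\<lambda>x. indicator \<Omega> x *\<^sub>R (\<phi> x)\<^sup>2) \<in> borel_measurable lebesgue" by simp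
      show "AE x in lebesgue. norm (indicator \<Omega> x *\<^sub>R (\<phi> x)\<^sup>2) \<le> norm (M\<^sup>2 * indicator \<Omega> x :: real)"
      proof (rule AE_I2)
        fix x
        have "\<bar>\<phi> x\<bar> \<le> M" if "x \<in> \<Omega>" using M(2)[of x] that by (simp add: \<Phi>_def ext0_def)
        then have "x \<in> \<Omega> \<Longrightarrow> (\<phi> x)\<^sup>2 \<le> M\<^sup>2" by (metis abs_le_square_iff abs_of_nonneg M(1))
        then show "norm (indicator \<Omega> x *\<^sub>R (\<phi> x)\<^sup>2) \<le> norm (M\<^sup>2 * indicator \<Omega> x :: real)"
          by (auto simp: indicator_def)
      qed
    qed
  qed
  have Gmeas: "set_borel_measurable lebesgue (D\<times>D) G"
    unfolding set_borel_measurable_def by (rule borel_to_lebesgue) (use DDb in measurable)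
  have L2G: "L2on (D\<times>D) G"
    unfolding L2on_def
  proof
    show "set_borel_measurable lebesgue (D\<times>D) G" by (rule Gmeas)
    show "set_integrable lebesgue (D\<times>D) (\<lambda>p. (G p)\<^sup>2)"
      unfolding set_integrable_def
    proof (rule integrableI_bounded)
      show "(\<lambda>p. indicator (D\<times>D) p *\<^sub>R (G p)\<^sup>2) \<in> borel_measurable lebesgue"
        by (rule borel_to_lebesgue) (use DDb in measurable)
      have "(\<integral>\<^sup>+p. ennreal (norm (indicator (D\<times>D) p *\<^sub>R (G p)\<^sup>2)) \<partial>lebesgue)
          = (\<integral>\<^sup>+p. ennreal (indicator (D\<times>D) p * (G p)\<^sup>2) \<partial>(lborel \<Otimes>\<^sub>M lborel))"
        by (simp add: nn_integral_completion lborel_prod)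
      also have "\<dots> = (\<integral>\<^sup>+x. \<integral>\<^sup>+y. ennreal (indicator (D\<times>D) (x,y) * (G (x,y))\<^sup>2) \<partial>lborel \<partial>lborel)"
        by (rule lborel.nn_integral_fst[symmetric]) (unfold lborel_prod, use DDb in measurable)
      also have "\<dots> \<le> (\<integral>\<^sup>+x. ennreal ((L * Bk)\<^sup>2) * indicator D x \<partial>lborel)"
      proof (rule nn_integral_mono)
        fix x
        show "(\<integral>\<^sup>+y. ennreal (indicator (D\<times>D) (x,y) * (G (x,y))\<^sup>2) \<partial>lborel) \<le> ennreal ((L * Bk)\<^sup>2) * indicator D x"
        proof (cases "x \<in> D")
          case True
          have "(\<integral>\<^sup>+y. ennreal (indicator (D\<times>D) (x,y) * (G (x,y))\<^sup>2) \<partial>lborel) \<le> (\<integral>\<^sup>+y. ennreal ((G (x,y))\<^sup>2) \<partial>lborel)"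
            by (intro nn_integral_mono) (auto simp: indicator_def)
          also have "\<dots> \<le> ennreal ((L * Bk)\<^sup>2)" by (rule GW)
          finally show ?thesis using True by simp
        next
          case False
          then show ?thesis by (simp add: indicator_def)
        qed
      qed
      also have "\<dots> = ennreal ((L * Bk)\<^sup>2) * emeasure lborel D"
        using Dopen by (subst nn_integral_cmult_indicator) auto
      also have "\<dots> < top" using Dfin by (simp add: ennreal_mult_less_top)
      finally show "(\<integral>\<^sup>+p. ennreal (norm (indicator (D\<times>D) p *\<^sub>R (G p)\<^sup>2)) \<partial>lebesgue) < \<infinity>" by simp
    qed
  qed
  have \<phi>U: "\<phi> \<in> U0 \<Omega> \<omega> d" unfolding U0_def using L2\<phi> L2G by (simp add: G_def D_def)

  have qL12: "L12 D q" and "\<exists>qs gs. (\<forall>k. qs k \<in> Qset \<Omega> \<omega> d \<and> Drel \<Omega> \<omega> d (qs k) (gs k)) \<and>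
        (\<lambda>k. L12norm D (\<lambda>p. qs k p - q p)) \<longlonglongrightarrow> 0 \<and>
        (\<lambda>k. \<integral>\<^sup>+ x. ennreal (indicator \<Omega> x * (gs k x - f x)\<^sup>2) \<partial>lebesgue) \<longlonglongrightarrow> 0"
    using qQ unfolding Qbar_def D_def by auto
  then obtain qs gs where H1: "\<And>k. qs k \<in> Qset \<Omega> \<omega> d" "\<And>k. Drel \<Omega> \<omega> d (qs k) (gs k)"
    and H2: "(\<lambda>k. L12norm D (\<lambda>p. qs k p - q p)) \<longlonglongrightarrow> 0"
    and H3: "(\<lambda>k. \<integral>\<^sup>+ x. ennreal (indicator \<Omega> x * (gs k x - f x)\<^sup>2) \<partial>lebesgue) \<longlonglongrightarrow> 0"
    by blast
  have qm: "set_borel_measurable lebesgue (D\<times>D) q" and qfin: "L12norm D q < top"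
    using qL12 unfolding L12_def by auto
  have L2qs: "L2on (D\<times>D) (qs k)" for k using H1(1)[of k] unfolding Qset_def D_def by auto
  have L2gs: "L2on \<Omega> (gs k)" for k using H1(2)[of k] unfolding Drel_def by auto
  have eqk: "set_lebesgue_integral lebesgue \<Omega> (\<lambda>x. gs k x * \<phi> x) = - set_lebesgue_integral lebesgue (D\<times>D) (\<lambda>p. qs k p * G p)" for k
    using H1(2)[of k] \<phi>U unfolding Drel_def by (simp add: G_def D_def)
  have intf: "set_integrable lebesgue \<Omega> (\<lambda>x. f x * \<phi> x)" by (rule L2_prod[OF f L2\<phi>])
  have intgs: "set_integrable lebesgue \<Omega> (\<lambda>x. gs k x * \<phi> x)" for k by (rule L2_prod[OF L2gs L2\<phi>])
  have P: "(\<integral>\<^sup>+x. ennreal ((\<Phi> x)\<^sup>2) \<partial>lebesgue) < top"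
  proof -
    have "(\<integral>\<^sup>+x. ennreal ((\<Phi> x)\<^sup>2) \<partial>lebesgue) \<le> (\<integral>\<^sup>+x. ennreal (M\<^sup>2) * indicator \<Omega> x \<partial>lebesgue)"
    proof (rule nn_integral_mono)
      fix x
      have "(\<Phi> x)\<^sup>2 \<le> M\<^sup>2" using M by (metis abs_le_square_iff abs_of_nonneg)
      moreover have "x \<notin> \<Omega> \<Longrightarrow> \<Phi> x = 0" by (simp add: \<Phi>_def ext0_def)
      ultimately show "ennreal ((\<Phi> x)\<^sup>2) \<le> ennreal (M\<^sup>2) * indicator \<Omega> x"
        by (cases "x \<in> \<Omega>") (auto simp: indicator_def)
    qed
    also have "\<dots> = ennreal (M\<^sup>2) * emeasure lebesgue \<Omega>" using \<Omega>leb by (rule nn_integral_cmult_indicator)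
    also have "\<dots> < top" using \<Omega>fin by (simp add: ennreal_mult_less_top)
    finally show ?thesis .
  qed
  have sP: "sqrtE (\<integral>\<^sup>+x. ennreal ((\<Phi> x)\<^sup>2) \<partial>lebesgue) < top"
    using P by (simp add: sqrtE_def)
  have lim1: "(\<lambda>k. set_lebesgue_integral lebesgue \<Omega> (\<lambda>x. gs k x * \<phi> x)) \<longlonglongrightarrow> set_lebesgue_integral lebesgue \<Omega> (\<lambda>x. f x * \<phi> x)"
  proof -
    define x where "x k = set_lebesgue_integral lebesgue \<Omega> (\<lambda>x. gs k x * \<phi> x) - set_lebesgue_integral lebesgue \<Omega> (\<lambda>x. f x * \<phi> x)" for k
    have "x \<longlonglongrightarrow> 0"
    proof (rule enn_tendsto_zero)
      fix k
      have int: "set_integrable lebesgue \<Omega> (\<lambda>y. gs k y * \<phi> y - f y * \<phi> y)"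
        by (rule set_integral_diff(1)[OF intgs intf])
      have xk: "x k = set_lebesgue_integral lebesgue \<Omega> (\<lambda>y. gs k y * \<phi> y - f y * \<phi> y)"
        unfolding x_def by (rule set_integral_diff(2)[OF intgs intf, symmetric])
      have m1: "(\<lambda>y. indicator \<Omega> y * (gs k y - f y)) \<in> borel_measurable lebesgue"
      proof -
        have a: "(\<lambda>y. indicator \<Omega> y *\<^sub>R gs k y) \<in> borel_measurable lebesgue"
          using L2gs[of k] unfolding L2on_def set_borel_measurable_def by blast
        have b: "(\<lambda>y. indicator \<Omega> y *\<^sub>R f y) \<in> borel_measurable lebesgue"
          using f unfolding L2on_def set_borel_measurable_def by blast
        have "(\<lambda>y. indicator \<Omega> y * (gs k y - f y)) = (\<lambda>y. indicator \<Omega> y *\<^sub>R gs k y - indicator \<Omega> y *\<^sub>R f y)"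
          by (simp add: algebra_simps)
        then show ?thesis using borel_measurable_diff[OF a b] by simp
      qed
      have m2: "\<Phi> \<in> borel_measurable lebesgue" by (rule borel_to_lebesgue[OF \<Phi>m])
      have "ennreal \<bar>x k\<bar> \<le> (\<integral>\<^sup>+y. ennreal (norm (indicator \<Omega> y *\<^sub>R (gs k y * \<phi> y - f y * \<phi> y))) \<partial>lebesgue)"
        unfolding xk set_lebesgue_integral_def
        using integral_norm_bound_ennreal[OF int[unfolded set_integrable_def]] by simp
      also have "\<dots> = (\<integral>\<^sup>+y. ennreal \<bar>(indicator \<Omega> y * (gs k y - f y)) * \<Phi> y\<bar> \<partial>lebesgue)"
        by (rule nn_integral_cong) (auto simp: \<Phi>_def ext0_def indicator_def algebra_simps)
      also have "\<dots> \<le> sqrtE (\<integral>\<^sup>+y. ennreal ((indicator \<Omega> y * (gs k y - f y))\<^sup>2) \<partial>lebesgue) * sqrtE (\<integral>\<^sup>+y. ennreal ((\<Phi> y)\<^sup>2) \<partial>lebesgue)"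
        by (rule CS_sqrtE[OF m1 m2])
      also have "\<dots> = sqrtE (\<integral>\<^sup>+ y. ennreal (indicator \<Omega> y * (gs k y - f y)\<^sup>2) \<partial>lebesgue) * sqrtE (\<integral>\<^sup>+y. ennreal ((\<Phi> y)\<^sup>2) \<partial>lebesgue)"
      proof -
        have eq: "(\<lambda>y. ennreal ((indicator \<Omega> y * (gs k y - f y))\<^sup>2)) = (\<lambda>y. ennreal (indicator \<Omega> y * (gs k y - f y)\<^sup>2))"
          by (rule ext) (simp add: indicator_def power_mult_distrib)
        show ?thesis by (simp only: eq)
      qed
      finally show "ennreal \<bar>x k\<bar> \<le> sqrtE (\<integral>\<^sup>+ y. ennreal (indicator \<Omega> y * (gs k y - f y)\<^sup>2) \<partial>lebesgue) * sqrtE (\<integral>\<^sup>+y. ennreal ((\<Phi> y)\<^sup>2) \<partial>lebesgue)" .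
    next
      show "(\<lambda>k. sqrtE (\<integral>\<^sup>+ y. ennreal (indicator \<Omega> y * (gs k y - f y)\<^sup>2) \<partial>lebesgue) * sqrtE (\<integral>\<^sup>+y. ennreal ((\<Phi> y)\<^sup>2) \<partial>lebesgue)) \<longlonglongrightarrow> 0"
        using ennreal_tendsto_cmult[OF sP sqrtE_tendsto_zero[OF H3]] by (simp add: mult.commute)
    qed
    then show ?thesis unfolding x_def by (simp add: LIM_zero_iff)
  qed
  have intq: "set_integrable lebesgue (D\<times>D) (\<lambda>p. q p * G p)"
    by (rule L12_integrable(1)[OF qm Gm LB0 GW qfin])
  have intqs: "set_integrable lebesgue (D\<times>D) (\<lambda>p. qs k p * G p)" for k
    by (rule L2_prod[OF L2qs L2G])
  have lim2: "(\<lambda>k. set_lebesgue_integral lebesgue (D\<times>D) (\<lambda>p. qs k p * G p)) \<longlonglongrightarrow> set_lebesgue_integral lebesgue (D\<times>D) (\<lambda>p. q p * G p)"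
  proof -
    define x where "x k = set_lebesgue_integral lebesgue (D\<times>D) (\<lambda>p. qs k p * G p) - set_lebesgue_integral lebesgue (D\<times>D) (\<lambda>p. q p * G p)" for k
    have "x \<longlonglongrightarrow> 0"
    proof (rule enn_tendsto_zero)
      fix k
      have int: "set_integrable lebesgue (D\<times>D) (\<lambda>p. qs k p * G p - q p * G p)"
        by (rule set_integral_diff(1)[OF intqs intq])
      have xk: "x k = set_lebesgue_integral lebesgue (D\<times>D) (\<lambda>p. qs k p * G p - q p * G p)"
        unfolding x_def by (rule set_integral_diff(2)[OF intqs intq, symmetric])
      have md: "set_borel_measurable lebesgue (D\<times>D) (\<lambda>p. qs k p - q p)"
      proof -
        have a: "(\<lambda>p. indicator (D\<times>D) p *\<^sub>R qs k p) \<in> borel_measurable lebesgue"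
          using L2qs[of k] unfolding L2on_def set_borel_measurable_def by blast
        have b: "(\<lambda>p. indicator (D\<times>D) p *\<^sub>R q p) \<in> borel_measurable lebesgue"
          using qm unfolding set_borel_measurable_def by blast
        have "(\<lambda>p. indicator (D\<times>D) p *\<^sub>R (qs k p - q p)) = (\<lambda>p. indicator (D\<times>D) p *\<^sub>R qs k p - indicator (D\<times>D) p *\<^sub>R q p)"
          by (simp add: algebra_simps)
        then show ?thesis unfolding set_borel_measurable_def using borel_measurable_diff[OF a b] by simp
      qed
      have "ennreal \<bar>x k\<bar> \<le> (\<integral>\<^sup>+p. ennreal (norm (indicator (D\<times>D) p *\<^sub>R (qs k p * G p - q p * G p))) \<partial>lebesgue)"
        unfolding xk set_lebesgue_integral_def
        using integral_norm_bound_ennreal[OF int[unfolded set_integrable_def]] by simp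
      also have "\<dots> = (\<integral>\<^sup>+p. ennreal \<bar>indicator (D\<times>D) p * (qs k p - q p) * G p\<bar> \<partial>lebesgue)"
        by (rule nn_integral_cong) (simp add: algebra_simps)
      also have "\<dots> \<le> ennreal (L * Bk) * L12norm D (\<lambda>p. qs k p - q p)"
        by (rule L12_bound[OF md Gm LB0 GW])
      finally show "ennreal \<bar>x k\<bar> \<le> ennreal (L * Bk) * L12norm D (\<lambda>p. qs k p - q p)" .
    next
      show "(\<lambda>k. ennreal (L * Bk) * L12norm D (\<lambda>p. qs k p - q p)) \<longlonglongrightarrow> 0"
        using ennreal_tendsto_cmult[OF _ H2, of "ennreal (L * Bk)"] by simp
    qed
    then show ?thesis unfolding x_def by (simp add: LIM_zero_iff)
  qed
  have "(\<lambda>k. set_lebesgue_integral lebesgue \<Omega> (\<lambda>x. gs k x * \<phi> x)) \<longlonglongrightarrow> - set_lebesgue_integral lebesgue (D\<times>D) (\<lambda>p. q p * G p)"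
    unfolding eqk by (rule tendsto_minus[OF lim2])
  from LIMSEQ_unique[OF lim1 this] show ?thesis by (simp add: G_def D_def)
qed

theorem proposition4p12:
  fixes \<Omega> :: "'a::euclidean_space set"
    and f :: "'a \<Rightarrow> real"
    and dbar :: real
    and \<omega> :: "real \<Rightarrow> 'a \<Rightarrow> real"
    and \<delta> :: "nat \<Rightarrow> real"
    and q :: "nat \<Rightarrow> 'a \<times> 'a \<Rightarrow> real"
    and \<mu> :: "'a measure"
    and h :: "'a \<Rightarrow> 'a"
  assumes dim: "DIM('a) \<ge> 2"
    and dom: "bounded \<Omega>" "connected \<Omega>" "open \<Omega>" "lipschitz_boundary \<Omega>"
    and f: "L2on \<Omega> f"
    and dbar: "dbar > 0"
    and kern: "admissible_kernels dbar \<omega>"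
    and deltas: "\<forall>k. 0 < \<delta> k \<and> \<delta> k < dbar" "\<delta> \<longlonglongrightarrow> 0"
    and qQ: "\<forall>k. q k \<in> Qbar \<Omega> \<omega> (\<delta> k) f"
    and bnd: "\<exists>C. \<forall>k. L12norm (Omega_d \<Omega> (\<delta> k)) (q k) \<le> ennreal C"
    and qhat: "vec_measure_on (closure \<Omega>) \<mu> h"
    and weak: "\<forall>\<psi>::'a \<Rightarrow> 'a. continuous_on (closure \<Omega>) \<psi> \<longrightarrow>
       (\<lambda>k. set_lebesgue_integral lebesgue \<Omega> (\<lambda>x. \<psi> x \<bullet> Rop \<Omega> \<omega> (\<delta> k) (q k) x))
         \<longlonglongrightarrow> integral\<^sup>L \<mu> (\<lambda>x. \<psi> x \<bullet> h x)"
  shows "\<forall>(\<phi>::'a \<Rightarrow> real) (grad\<phi>::'a \<Rightarrow> 'a).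
           (\<forall>x\<in>\<Omega>. (\<phi> has_derivative (\<lambda>v. grad\<phi> x \<bullet> v)) (at x)) \<and>
           continuous_on \<Omega> grad\<phi> \<and>
           (\<exists>K. compact K \<and> K \<subseteq> \<Omega> \<and> (\<forall>x\<in>\<Omega> - K. \<phi> x = 0))
         \<longrightarrow> - integral\<^sup>L \<mu> (\<lambda>x. indicator \<Omega> x * (grad\<phi> x \<bullet> h x))
             = set_lebesgue_integral lebesgue \<Omega> (\<lambda>x. f x * \<phi> x)"
proof (intro allI impI)
  fix \<phi> :: "'a \<Rightarrow> real" and g :: "'a \<Rightarrow> 'a"
  assume H: "(\<forall>x\<in>\<Omega>. (\<phi> has_derivative (\<lambda>v. g x \<bullet> v)) (at x)) \<and> continuous_on \<Omega> g \<and>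
           (\<exists>K. compact K \<and> K \<subseteq> \<Omega> \<and> (\<forall>x\<in>\<Omega> - K. \<phi> x = 0))"
  then have der: "\<forall>x\<in>\<Omega>. (\<phi> has_derivative (\<lambda>v. g x \<bullet> v)) (at x)" and gc: "continuous_on \<Omega> g" by auto
  from H obtain K where K: "compact K" "K \<subseteq> \<Omega>" "\<forall>x\<in>\<Omega> - K. \<phi> x = 0" by blast
  have opn: "open \<Omega>" using dom by simp
  define \<psi> where "\<psi> = psi \<Omega> g"
  have \<psi>_eq: "\<psi> x = (if x \<in> \<Omega> then g x else 0)" for x
    unfolding \<psi>_def by (rule psi_def[OF opn der gc K])
  have \<psi>c: "continuous_on UNIV \<psi>" unfolding \<psi>_def by (rule psi_cont[OF opn der gc K])
  have \<psi>m[measurable]: "\<psi> \<in> borel_measurable borel" by (rule borel_measurable_continuous_onI[OF \<psi>c])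
  obtain M where M: "M \<ge> 0" "\<And>x. norm (\<psi> x) \<le> M"
    using psi_bounded[OF opn der gc K] unfolding \<psi>_def by blast
  have \<psi>0: "\<And>x. x \<notin> \<Omega> \<Longrightarrow> \<psi> x = 0" by (simp add: \<psi>_eq)
  have taylor: "\<forall>e>0. \<exists>d>0. \<forall>x y. norm (y - x) < d \<longrightarrow>
    \<bar>ext0 \<Omega> \<phi> y - ext0 \<Omega> \<phi> x - \<psi> x \<bullet> (y - x)\<bar> \<le> e * norm (y - x)"
    unfolding \<psi>_def by (rule Phi_taylor[OF opn der gc K])
  define Bk where "Bk = sqrt (inverse (K2n TYPE('a)))"
  have Kp: "K2n TYPE('a) > 0" by (rule K2n_pos)
  have Bk0: "Bk \<ge> 0" using Kp by (simp add: Bk_def)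
  have Bk2: "Bk\<^sup>2 = inverse (K2n TYPE('a))" using Kp by (simp add: Bk_def)
  obtain C0 where C0: "\<And>k. L12norm (Omega_d \<Omega> (\<delta> k)) (q k) \<le> ennreal C0" using bnd by blast
  define C where "C = max C0 0"
  have Cx: "L12norm (Omega_d \<Omega> (\<delta> k)) (q k) \<le> ennreal C" for k
    using order_trans[OF C0[of k] ennreal_leI[of C0 C]] by (simp add: C_def)
  have C: "C \<ge> 0" "\<And>k. L12norm (Omega_d \<Omega> (\<delta> k)) (q k) \<le> ennreal C"
    using Cx by (auto simp: C_def)
  define S where "S = set_lebesgue_integral lebesgue \<Omega> (\<lambda>x. f x * \<phi> x)"
  define T where "T k = set_lebesgue_integral lebesgue \<Omega> (\<lambda>x. \<psi> x \<bullet> Rop \<Omega> \<omega> (\<delta> k) (q k) x)" for k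
  define Hv where "Hv = integral\<^sup>L \<mu> (\<lambda>x. \<psi> x \<bullet> h x)"
  have Tlim: "T \<longlonglongrightarrow> Hv"
    unfolding T_def Hv_def using weak continuous_on_subset[OF \<psi>c] by blast
  have est: "\<exists>N. \<forall>k\<ge>N. \<bar>S + T k\<bar> \<le> e * Bk * C" if e: "e > 0" for e
  proof -
    obtain \<eta> where \<eta>: "\<eta> > 0" "\<forall>x y. norm (y - x) < \<eta> \<longrightarrow>
      \<bar>ext0 \<Omega> \<phi> y - ext0 \<Omega> \<phi> x - \<psi> x \<bullet> (y - x)\<bar> \<le> e * norm (y - x)"
      using taylor e by blast
    obtain N where N: "\<And>k. k \<ge> N \<Longrightarrow> \<delta> k < \<eta>"
      using order_tendstoD(2)[OF deltas(2) \<eta>(1)] by (auto simp: eventually_sequentially)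
    show ?thesis
    proof (intro exI[of _ N] allI impI)
      fix k assume kN: "k \<ge> N"
      define d where "d = \<delta> k"
      define D where "D = Omega_d \<Omega> d"
      have d: "0 < d" "d < dbar" using deltas(1) by (auto simp: d_def)
      have dn: "d < \<eta>" using N[OF kN] by (simp add: d_def)
      have wm[measurable]: "\<omega> d \<in> borel_measurable borel" and w0: "\<And>z. \<omega> d z \<ge> 0"
        and wsupp: "\<And>z. norm z \<ge> d \<Longrightarrow> \<omega> d z = 0"
        using kern d unfolding admissible_kernels_def by blast+
      have \<Omega>D: "\<Omega> \<subseteq> D" using Omega_d_facts[OF dom(1) d(1)] by (simp add: D_def)
      have qk: "q k \<in> Qbar \<Omega> \<omega> d f" using qQ by (simp add: d_def)
      have qm: "set_borel_measurable lebesgue (D\<times>D) (q k)" and qfin: "L12norm D (q k) < top"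
        using qk unfolding Qbar_def L12_def D_def by auto
      have qC: "L12norm D (q k) \<le> ennreal C" using C(2)[of k] by (simp add: D_def d_def)
      define G where "G = Gop \<Omega> \<omega> d \<phi>"
      define W1 where "W1 p = \<omega> d (fst p - snd p) * (\<psi> (fst p) \<bullet> (fst p - snd p))" for p :: "'a \<times> 'a"
      define W2 where "W2 p = G p - W1 p" for p
      have W1m[measurable]: "W1 \<in> borel_measurable borel" unfolding W1_def by measurable
      have Gm[measurable]: "G \<in> borel_measurable borel"
      proof -
        have Pm: "ext0 \<Omega> \<phi> \<in> borel_measurable borel"
          by (rule borel_measurable_continuous_onI[OF Phi_cont[OF opn der gc K]])
        have "G = (\<lambda>p. (ext0 \<Omega> \<phi> (fst p) - ext0 \<Omega> \<phi> (snd p)) * \<omega> d (fst p - snd p))"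
          by (rule ext) (simp add: G_def Gop_def)
        then show ?thesis using Pm by simp
      qed
      have W2m[measurable]: "W2 \<in> borel_measurable borel" unfolding W2_def by measurable
      have W1le: "\<bar>W1 (x,y)\<bar> \<le> M * (norm (x - y) * \<omega> d (x - y))" for x y
      proof -
        have "\<bar>\<psi> x \<bullet> (x - y)\<bar> \<le> norm (\<psi> x) * norm (x - y)" by (rule Cauchy_Schwarz_ineq2)
        also have "\<dots> \<le> M * norm (x - y)" by (rule mult_right_mono[OF M(2)]) simp
        finally have "\<bar>\<psi> x \<bullet> (x - y)\<bar> \<le> M * norm (x - y)" .
        then have le: "\<omega> d (x - y) * \<bar>\<psi> x \<bullet> (x - y)\<bar> \<le> \<omega> d (x - y) * (M * norm (x - y))"
          by (rule mult_left_mono) (rule w0)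
        have "\<bar>W1 (x,y)\<bar> = \<omega> d (x - y) * \<bar>\<psi> x \<bullet> (x - y)\<bar>"
          unfolding W1_def fst_conv snd_conv abs_mult by (simp only: abs_of_nonneg[OF w0])
        also have "\<dots> \<le> \<omega> d (x - y) * (M * norm (x - y))" by (rule le)
        also have "\<dots> = M * (norm (x - y) * \<omega> d (x - y))" by (simp only: ac_simps)
        finally show ?thesis .
      qed
      have W2le: "\<bar>W2 (x,y)\<bar> \<le> e * (norm (x - y) * \<omega> d (x - y))" for x y
      proof (cases "norm (x - y) < d")
        case True
        have "norm (y - x) < \<eta>" using True dn by (simp add: norm_minus_commute)
        then have t: "\<bar>ext0 \<Omega> \<phi> y - ext0 \<Omega> \<phi> x - \<psi> x \<bullet> (y - x)\<bar> \<le> e * norm (y - x)" using \<eta>(2) by blast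
        have "W2 (x,y) = - (\<omega> d (x - y) * (ext0 \<Omega> \<phi> y - ext0 \<Omega> \<phi> x - \<psi> x \<bullet> (y - x)))"
          by (simp add: W2_def W1_def G_def Gop_def algebra_simps inner_diff_right)
        then have "\<bar>W2 (x,y)\<bar> = \<omega> d (x - y) * \<bar>ext0 \<Omega> \<phi> y - ext0 \<Omega> \<phi> x - \<psi> x \<bullet> (y - x)\<bar>"
          using w0 by (simp add: abs_mult)
        also have "\<dots> \<le> \<omega> d (x - y) * (e * norm (y - x))" by (rule mult_left_mono[OF t w0])
        finally show ?thesis by (simp add: norm_minus_commute algebra_simps)
      next
        case False
        then have "\<omega> d (x - y) = 0" using wsupp by simp
        then show ?thesis by (simp add: W2_def W1_def G_def Gop_def)
      qed
      have W1B: "(\<integral>\<^sup>+y. ennreal ((W1 (x,y))\<^sup>2) \<partial>lborel) \<le> ennreal ((M * Bk)\<^sup>2)" for x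
        unfolding Bk_def by (rule W_bound[OF kern d M(1) W1le])
      have W2B: "(\<integral>\<^sup>+y. ennreal ((W2 (x,y))\<^sup>2) \<partial>lborel) \<le> ennreal ((e * Bk)\<^sup>2)" for x
        unfolding Bk_def by (rule W_bound[OF kern d _ W2le]) (use e in simp)
      have MB0: "M * Bk \<ge> 0" using M(1) Bk0 by simp
      have eB0: "e * Bk \<ge> 0" using e Bk0 by simp
      have int1: "set_integrable lebesgue (D\<times>D) (\<lambda>p. q k p * W1 p)"
        by (rule L12_integrable(1)[OF qm W1m MB0 W1B qfin])
      have int2: "set_integrable lebesgue (D\<times>D) (\<lambda>p. q k p * W2 p)"
        by (rule L12_integrable(1)[OF qm W2m eB0 W2B qfin])
      have b2: "ennreal \<bar>set_lebesgue_integral lebesgue (D\<times>D) (\<lambda>p. q k p * W2 p)\<bar> \<le> ennreal (e * Bk) * L12norm D (q k)"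
        by (rule L12_integrable(2)[OF qm W2m eB0 W2B qfin])
      also have "\<dots> \<le> ennreal (e * Bk) * ennreal C" by (rule mult_left_mono[OF qC]) simp
      also have "\<dots> = ennreal (e * Bk * C)" using eB0 C(1) by (simp add: ennreal_mult)
      finally have b2': "\<bar>set_lebesgue_integral lebesgue (D\<times>D) (\<lambda>p. q k p * W2 p)\<bar> \<le> e * Bk * C"
        using eB0 C(1) by (simp add: ennreal_le_iff)
      have dual: "S = - set_lebesgue_integral lebesgue (D\<times>D) (\<lambda>p. q k p * G p)"
        unfolding S_def D_def G_def by (rule duality[OF kern d dom(1) opn f qk der gc K])
      have split: "set_lebesgue_integral lebesgue (D\<times>D) (\<lambda>p. q k p * G p)
          = set_lebesgue_integral lebesgue (D\<times>D) (\<lambda>p. q k p * W1 p) + set_lebesgue_integral lebesgue (D\<times>D) (\<lambda>p. q k p * W2 p)"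
      proof -
        have "(\<lambda>p. q k p * G p) = (\<lambda>p. q k p * W1 p + q k p * W2 p)"
          by (rule ext) (simp add: W2_def algebra_simps)
        then show ?thesis using set_integral_add(2)[OF int1 int2] by simp
      qed
      have kB: "\<And>x. (\<integral>\<^sup>+y. ennreal ((norm (x - y) * \<omega> d (x - y))\<^sup>2) \<partial>lborel) \<le> ennreal (Bk\<^sup>2)"
        using kernel_nn[OF kern d] Bk2 by simp
      have R: "set_lebesgue_integral lebesgue (D\<times>D) (\<lambda>p. q k p * W1 p) = T k"
        unfolding W1_def T_def Rop_def D_def d_def[symmetric]
        by (rule key2[OF qm[unfolded D_def] qfin[unfolded D_def] wm \<psi>m M(2) Bk0 kB \<Omega>D[unfolded D_def] \<psi>0])
      have "S + T k = - set_lebesgue_integral lebesgue (D\<times>D) (\<lambda>p. q k p * W2 p)"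
        using dual split R by simp
      then show "\<bar>S + T k\<bar> \<le> e * Bk * C" using b2' by simp
    qed
  qed
  have lim: "(\<lambda>k. \<bar>S + T k\<bar>) \<longlonglongrightarrow> \<bar>S + Hv\<bar>"
    by (intro tendsto_intros Tlim)
  have bound: "\<bar>S + Hv\<bar> \<le> e * Bk * C" if e: "e > 0" for e
  proof -
    obtain N where N: "\<forall>k\<ge>N. \<bar>S + T k\<bar> \<le> e * Bk * C" using est[OF e] by blast
    show ?thesis
      by (rule tendsto_upperbound[OF lim]) (use N in \<open>auto simp: eventually_sequentially\<close>)
  qed
  have "S + Hv = 0"
  proof (rule ccontr)
    assume nz: "S + Hv \<noteq> 0"
    define e where "e = \<bar>S + Hv\<bar> / (2 * (Bk * C + 1))"
    have pos: "Bk * C + 1 > 0" using Bk0 C(1) by (simp add: add_nonneg_pos)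
    have e: "e > 0" unfolding e_def using nz pos by simp
    have "\<bar>S + Hv\<bar> \<le> e * Bk * C" by (rule bound[OF e])
    also have "\<dots> = \<bar>S + Hv\<bar> * (Bk * C) / (2 * (Bk * C + 1))" by (simp add: e_def)
    also have "\<dots> < \<bar>S + Hv\<bar>"
    proof -
      have "Bk * C / (2 * (Bk * C + 1)) < 1" using pos by (simp add: divide_less_eq)
      then have "\<bar>S + Hv\<bar> * (Bk * C / (2 * (Bk * C + 1))) < \<bar>S + Hv\<bar> * 1"
        using nz by (intro mult_strict_left_mono) auto
      then show ?thesis by simp
    qed
    finally show False by simp
  qed
  moreover have "integral\<^sup>L \<mu> (\<lambda>x. indicator \<Omega> x * (g x \<bullet> h x)) = Hv"
    unfolding Hv_def by (rule Bochner_Integration.integral_cong) (auto simp: \<psi>_eq indicator_def)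
  ultimately show "- integral\<^sup>L \<mu> (\<lambda>x. indicator \<Omega> x * (g x \<bullet> h x)) = set_lebesgue_integral lebesgue \<Omega> (\<lambda>x. f x * \<phi> x)"
    unfolding S_def by simp
qed

end
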